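(* Let $\kappa$ be an inaccessible cardinal and let $p:\widetilde{U}\to U$ be the morphism of $\mathbf{Gpd}^{\mathbf{G}}$ described in the context. For a morphism $f:A\to C$ in $\mathbf{Gpd}^{\mathbf{G}}$ the following are equivalent: (i) $f$ is a pullback of $p$ in $\mathbf{Gpd}^{\mathbf{G}}$; (ii) the underlying functor of groupoids of $f$ is a split fibration (an isofibration admitting a split cleavage) whose fibers are $\kappa$-small.
   Context: $\mathbf{Gpd}^{\mathbf{G}}$ is the category of groupoids equipped with an involution and functors commuting with the involutions. A groupoid is $\kappa$-small if its set of objects and all its hom-sets have cardinality $<\kappa$. For a functor $f$, the fiber over $x$ is the subgroupoid of objects over $x$ and morphisms over $1_x$. A split cleavage for an isofibration $f:A\to C$ assigns to each isomorphism $\sigma:x\to y$ in $C$ and each $z$ with $f(z)=x$ a morphism $c(\sigma,z)$ with domain $z$ and $f(c(\sigma,z))=\sigma$, such that $c(1_x,z)=1_z$ and $c(\tau\circ\sigma,z)=c(\tau,\mathrm{cod}\,c(\sigma,z))\circ c(\sigma,z)$. The groupoid $\widetilde{U}$: objects are tuples $(A_0,A_1,a,\varphi)$ with $A_0,A_1$ $\kappa$-small groupoids, $a$ an object of $A_0$, $\varphi:A_0\to A_1$ an isomorphism of groupoids; a morphism $(A_0,A_1,a,\varphi)\to(B_0,B_1,b,\psi)$ is a tuple $(\rho_0,\rho_1,\tau,\alpha)$ with $\rho_i:A_i\to B_i$ isomorphisms of groupoids, $\tau:\rho_0(a)\to b$ an isomorphism in $B_0$, $\alpha:\psi\circ\rho_0\Rightarrow\rho_1\circ\varphi$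 a natural isomorphism; composition $(\rho'_0,\rho'_1,\tau',\alpha')\circ(\rho_0,\rho_1,\tau,\alpha)=(\rho'_0\rho_0,\rho'_1\rho_1,\tau'\circ\rho'_0(\tau),\rho'_1(\alpha)\circ\alpha'_{\rho_0})$. Its involution sends $(A_0,A_1,a,\varphi)$ to $(A_1,A_0,\varphi(a),\varphi^{-1})$ and $(\rho_0,\rho_1,\tau,\alpha)$ to $(\rho_1,\rho_0,\psi(\tau)\circ\alpha_a^{-1},\psi^{-1}(\alpha^{-1}_{\varphi^{-1}(-)}))$. The groupoid $U$ is the unpointed version: objects $(A_0,A_1,\varphi)$, morphisms $(\rho_0,\rho_1,\alpha)$, with the analogous composition and involution $(A_0,A_1,\varphi)\mapsto(A_1,A_0,\varphi^{-1})$, $(\rho_0,\rho_1,\alpha)\mapsto(\rho_1,\rho_0,\psi^{-1}(\alpha^{-1}_{\varphi^{-1}(-)}))$. The morphism $p$ sends $(A_0,A_1,a,\varphi)\mapsto(A_0,A_1,\varphi)$ and $(\rho_0,\rho_1,\tau,\alpha)\mapsto(\rho_0,\rho_1,\alpha)$. *)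

theory Defs
  imports Main "HOL-Library.FuncSet"
begin

text \<open>An inaccessible cardinal, represented as a cardinal order on the whole universe
  of a type 'k (so the type 'k has exactly cardinality kappa): uncountable, regular,
  strong limit.\<close>
definition inaccessible :: "'k rel \<Rightarrow> bool" where
  "inaccessible kappa \<longleftrightarrow>
     card_order kappa \<and> ordLess2 natLeq kappa \<and> regularCard kappa \<and>
     (\<forall>S :: 'k set. ordLess2 (card_of S) kappa \<longrightarrow> ordLess2 (card_of (Pow S)) kappa)"

record ('o, 'm) gpd =
  Obj :: "'o set"
  Arr :: "'m set"
  Dom :: "'m \<Rightarrow> 'o"
  Cod :: "'m \<Rightarrow> 'o"
  Ide :: "'o \<Rightarrow> 'm"
  Cmp :: "'m \<Rightarrow> 'm \<Rightarrow> 'm"   \<comment> \<open>Cmp G g f = g composed after f\<close>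

definition hom :: "('o, 'm) gpd \<Rightarrow> 'o \<Rightarrow> 'o \<Rightarrow> 'm set" where
  "hom G x y = {m \<in> Arr G. Dom G m = x \<and> Cod G m = y}"

definition groupoid :: "('o, 'm) gpd \<Rightarrow> bool" where
  "groupoid G \<longleftrightarrow>
    (\<forall>m\<in>Arr G. Dom G m \<in> Obj G \<and> Cod G m \<in> Obj G) \<and>
    (\<forall>x\<in>Obj G. Ide G x \<in> hom G x x) \<and>
    (\<forall>f\<in>Arr G. \<forall>g\<in>Arr G. Cod G f = Dom G g \<longrightarrow>
        Cmp G g f \<in> hom G (Dom G f) (Cod G g)) \<and>
    (\<forall>f\<in>Arr G. \<forall>g\<in>Arr G. \<forall>h\<in>Arr G. Cod G f = Dom G g \<longrightarrow> Cod G g = Dom G h \<longrightarrow>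
        Cmp G h (Cmp G g f) = Cmp G (Cmp G h g) f) \<and>
    (\<forall>f\<in>Arr G. Cmp G (Ide G (Cod G f)) f = f \<and> Cmp G f (Ide G (Dom G f)) = f) \<and>
    (\<forall>f\<in>Arr G. \<exists>g\<in>hom G (Cod G f) (Dom G f).
        Cmp G g f = Ide G (Dom G f) \<and> Cmp G f g = Ide G (Cod G f))"

definition ginv :: "('o, 'm) gpd \<Rightarrow> 'm \<Rightarrow> 'm" where
  "ginv G f = (THE g. g \<in> hom G (Cod G f) (Dom G f) \<and>
                      Cmp G g f = Ide G (Dom G f) \<and> Cmp G f g = Ide G (Cod G f))"

text \<open>A groupoid given set-theoretically: its structure maps carry no data outside
  their domains of definition (so each groupoid occurs only once as an object of U).\<close>
definition canonical :: "('o, 'm) gpd \<Rightarrow> bool" where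
  "canonical G \<longleftrightarrow> Dom G \<in> extensional (Arr G) \<and> Cod G \<in> extensional (Arr G) \<and>
     Ide G \<in> extensional (Obj G) \<and>
     (\<forall>g f. \<not> (f \<in> Arr G \<and> g \<in> Arr G \<and> Cod G f = Dom G g) \<longrightarrow> Cmp G g f = undefined)"

definition small :: "'k rel \<Rightarrow> ('o, 'm) gpd \<Rightarrow> bool" where
  "small kappa G \<longleftrightarrow> ordLess2 (card_of (Obj G)) kappa \<and>
     (\<forall>x\<in>Obj G. \<forall>y\<in>Obj G. ordLess2 (card_of (hom G x y)) kappa)"

type_synonym ('o, 'm, 'p, 'n) fn = "('o \<Rightarrow> 'p) \<times> ('m \<Rightarrow> 'n)"

abbreviation fo :: "('o, 'm, 'p, 'n) fn \<Rightarrow> 'o \<Rightarrow> 'p" where "fo F \<equiv> fst F"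
abbreviation fm :: "('o, 'm, 'p, 'n) fn \<Rightarrow> 'm \<Rightarrow> 'n" where "fm F \<equiv> snd F"

definition is_functor :: "('o, 'm) gpd \<Rightarrow> ('p, 'n) gpd \<Rightarrow> ('o, 'm, 'p, 'n) fn \<Rightarrow> bool" where
  "is_functor G H F \<longleftrightarrow>
    (\<forall>x\<in>Obj G. fo F x \<in> Obj H) \<and>
    (\<forall>m\<in>Arr G. fm F m \<in> hom H (fo F (Dom G m)) (fo F (Cod G m))) \<and>
    (\<forall>x\<in>Obj G. fm F (Ide G x) = Ide H (fo F x)) \<and>
    (\<forall>f\<in>Arr G. \<forall>g\<in>Arr G. Cod G f = Dom G g \<longrightarrow>
        fm F (Cmp G g f) = Cmp H (fm F g) (fm F f))"

definition is_iso :: "('o, 'm) gpd \<Rightarrow> ('p, 'n) gpd \<Rightarrow> ('o, 'm, 'p, 'n) fn \<Rightarrow> bool" where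
  "is_iso G H F \<longleftrightarrow> is_functor G H F \<and>
     bij_betw (fo F) (Obj G) (Obj H) \<and> bij_betw (fm F) (Arr G) (Arr H)"

definition ext_fn :: "('o, 'm) gpd \<Rightarrow> ('o, 'm, 'p, 'n) fn \<Rightarrow> bool" where
  "ext_fn G F \<longleftrightarrow> fo F \<in> extensional (Obj G) \<and> fm F \<in> extensional (Arr G)"

definition fcomp :: "('o, 'm) gpd \<Rightarrow> ('p, 'n, 'q, 'l) fn \<Rightarrow> ('o, 'm, 'p, 'n) fn \<Rightarrow> ('o, 'm, 'q, 'l) fn" where
  "fcomp G F2 F1 = ((\<lambda>x\<in>Obj G. fo F2 (fo F1 x)), (\<lambda>m\<in>Arr G. fm F2 (fm F1 m)))"

definition fid :: "('o, 'm) gpd \<Rightarrow> ('o, 'm, 'o, 'm) fn" where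
  "fid G = ((\<lambda>x\<in>Obj G. x), (\<lambda>m\<in>Arr G. m))"

definition finv :: "('o, 'm) gpd \<Rightarrow> ('p, 'n) gpd \<Rightarrow> ('o, 'm, 'p, 'n) fn \<Rightarrow> ('p, 'n, 'o, 'm) fn" where
  "finv G H F = ((\<lambda>y\<in>Obj H. the_inv_into (Obj G) (fo F) y),
                 (\<lambda>n\<in>Arr H. the_inv_into (Arr G) (fm F) n))"

text \<open>Natural transformation alpha : F1 => F2 between functors G -> H; since H is a
  groupoid, it is automatically a natural isomorphism.\<close>
definition nat_iso :: "('o, 'm) gpd \<Rightarrow> ('p, 'n) gpd \<Rightarrow> ('o, 'm, 'p, 'n) fn \<Rightarrow>
                       ('o, 'm, 'p, 'n) fn \<Rightarrow> ('o \<Rightarrow> 'n) \<Rightarrow> bool" where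
  "nat_iso G H F1 F2 alpha \<longleftrightarrow>
    (\<forall>x\<in>Obj G. alpha x \<in> hom H (fo F1 x) (fo F2 x)) \<and>
    (\<forall>m\<in>Arr G. Cmp H (fm F2 m) (alpha (Dom G m)) = Cmp H (alpha (Cod G m)) (fm F1 m))"

section \<open>Groupoids with involution (the category Gpd^G)\<close>

definition gpdG :: "('o, 'm) gpd \<Rightarrow> ('o, 'm, 'o, 'm) fn \<Rightarrow> bool" where
  "gpdG G i \<longleftrightarrow> groupoid G \<and> is_functor G G i \<and>
     (\<forall>x\<in>Obj G. fo i (fo i x) = x) \<and> (\<forall>m\<in>Arr G. fm i (fm i m) = m)"

definition gpdG_mor :: "('o, 'm) gpd \<Rightarrow> ('o, 'm, 'o, 'm) fn \<Rightarrow> ('p, 'n) gpd \<Rightarrow>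
                        ('p, 'n, 'p, 'n) fn \<Rightarrow> ('o, 'm, 'p, 'n) fn \<Rightarrow> bool" where
  "gpdG_mor G i H j F \<longleftrightarrow> is_functor G H F \<and>
     (\<forall>x\<in>Obj G. fo F (fo i x) = fo j (fo F x)) \<and>
     (\<forall>m\<in>Arr G. fm F (fm i m) = fm j (fm F m))"

text \<open>Isomorphism in Gpd^G (its inverse then automatically commutes with the involutions).\<close>
definition gpdG_iso :: "('o, 'm) gpd \<Rightarrow> ('o, 'm, 'o, 'm) fn \<Rightarrow> ('p, 'n) gpd \<Rightarrow>
                        ('p, 'n, 'p, 'n) fn \<Rightarrow> ('o, 'm, 'p, 'n) fn \<Rightarrow> bool" where
  "gpdG_iso G i H j F \<longleftrightarrow> gpdG_mor G i H j F \<and>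
     bij_betw (fo F) (Obj G) (Obj H) \<and> bij_betw (fm F) (Arr G) (Arr H)"

definition pb_gpd :: "('co, 'cm) gpd \<Rightarrow> ('xo, 'xm) gpd \<Rightarrow> ('co, 'cm, 'wo, 'wm) fn \<Rightarrow>
                      ('xo, 'xm, 'wo, 'wm) fn \<Rightarrow> ('co \<times> 'xo, 'cm \<times> 'xm) gpd" where
  "pb_gpd C X h q = \<lparr>
     Obj = {(c, x). c \<in> Obj C \<and> x \<in> Obj X \<and> fo h c = fo q x},
     Arr = {(m, n). m \<in> Arr C \<and> n \<in> Arr X \<and> fm h m = fm q n},
     Dom = (\<lambda>(m, n). (Dom C m, Dom X n)),
     Cod = (\<lambda>(m, n). (Cod C m, Cod X n)),
     Ide = (\<lambda>(c, x). (Ide C c, Ide X x)),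
     Cmp = (\<lambda>(g, g') (f, f'). (Cmp C g f, Cmp X g' f')) \<rparr>"

definition pb_inv :: "('co, 'cm, 'co, 'cm) fn \<Rightarrow> ('xo, 'xm, 'xo, 'xm) fn \<Rightarrow>
                      ('co \<times> 'xo, 'cm \<times> 'xm, 'co \<times> 'xo, 'cm \<times> 'xm) fn" where
  "pb_inv iC iX = ((\<lambda>(c, x). (fo iC c, fo iX x)), (\<lambda>(m, n). (fm iC m, fm iX n)))"

definition is_pullback_square ::
  "('ao, 'am) gpd \<Rightarrow> ('ao, 'am, 'ao, 'am) fn \<Rightarrow>
   ('co, 'cm) gpd \<Rightarrow> ('co, 'cm, 'co, 'cm) fn \<Rightarrow>
   ('xo, 'xm) gpd \<Rightarrow> ('xo, 'xm, 'xo, 'xm) fn \<Rightarrow>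
   ('wo, 'wm) gpd \<Rightarrow> ('wo, 'wm, 'wo, 'wm) fn \<Rightarrow>
   ('ao, 'am, 'co, 'cm) fn \<Rightarrow> ('ao, 'am, 'xo, 'xm) fn \<Rightarrow>
   ('co, 'cm, 'wo, 'wm) fn \<Rightarrow> ('xo, 'xm, 'wo, 'wm) fn \<Rightarrow> bool" where
  "is_pullback_square A iA C iC X iX W iW f g h q \<longleftrightarrow>
     gpdG_mor A iA C iC f \<and> gpdG_mor A iA X iX g \<and>
     gpdG_mor C iC W iW h \<and> gpdG_mor X iX W iW q \<and>
     (\<forall>a\<in>Obj A. fo h (fo f a) = fo q (fo g a)) \<and>
     (\<forall>m\<in>Arr A. fm h (fm f m) = fm q (fm g m)) \<and>
     gpdG_iso A iA (pb_gpd C X h q) (pb_inv iC iX)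
        ((\<lambda>a. (fo f a, fo g a)), (\<lambda>m. (fm f m, fm g m)))"

section \<open>The groupoids U and U-tilde and the morphism p\<close>

type_synonym 'k G = "('k, 'k) gpd"
type_synonym 'k F = "('k, 'k, 'k, 'k) fn"
type_synonym 'k uobj = "'k G \<times> 'k G \<times> 'k F"
type_synonym 'k uarr = "'k uobj \<times> 'k uobj \<times> 'k F \<times> 'k F \<times> ('k \<Rightarrow> 'k)"
type_synonym 'k tobj = "'k G \<times> 'k G \<times> 'k \<times> 'k F"
type_synonym 'k tarr = "'k tobj \<times> 'k tobj \<times> 'k F \<times> 'k F \<times> 'k \<times> ('k \<Rightarrow> 'k)"

text \<open>kappa-small groupoids (as sets, with elements taken from the type 'k of size kappa).\<close>
definition sgpd :: "'k rel \<Rightarrow> 'k G \<Rightarrow> bool" where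
  "sgpd kappa A \<longleftrightarrow> groupoid A \<and> canonical A \<and> small kappa A"

definition U_obj :: "'k rel \<Rightarrow> 'k uobj set" where
  "U_obj kappa = {(A0, A1, phi). sgpd kappa A0 \<and> sgpd kappa A1 \<and>
                                 is_iso A0 A1 phi \<and> ext_fn A0 phi}"

definition U_arr :: "'k rel \<Rightarrow> 'k uarr set" where
  "U_arr kappa = {((A0, A1, phi), (B0, B1, psi), rho0, rho1, alpha).
      (A0, A1, phi) \<in> U_obj kappa \<and> (B0, B1, psi) \<in> U_obj kappa \<and>
      is_iso A0 B0 rho0 \<and> ext_fn A0 rho0 \<and> is_iso A1 B1 rho1 \<and> ext_fn A1 rho1 \<and>
      alpha \<in> extensional (Obj A0) \<and>
      nat_iso A0 B1 (fcomp A0 psi rho0) (fcomp A0 rho1 phi) alpha}"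

definition U_ide :: "'k uobj \<Rightarrow> 'k uarr" where
  "U_ide s = (case s of (A0, A1, phi) \<Rightarrow>
      (s, s, fid A0, fid A1, (\<lambda>x\<in>Obj A0. Ide A1 (fo phi x))))"

definition U_cmp :: "'k uarr \<Rightarrow> 'k uarr \<Rightarrow> 'k uarr" where
  "U_cmp g f = (case f of (s, t, rho0, rho1, alpha) \<Rightarrow>
     case g of (t', u, rho0', rho1', alpha') \<Rightarrow>
     case s of (A0, A1, phi) \<Rightarrow> case u of (C0, C1, chi) \<Rightarrow>
       (s, u, fcomp A0 rho0' rho0, fcomp A1 rho1' rho1,
        (\<lambda>x\<in>Obj A0. Cmp C1 (fm rho1' (alpha x)) (alpha' (fo rho0 x)))))"

definition U :: "'k rel \<Rightarrow> ('k uobj, 'k uarr) gpd" where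
  "U kappa = \<lparr> Obj = U_obj kappa, Arr = U_arr kappa,
               Dom = (\<lambda>m. fst m), Cod = (\<lambda>m. fst (snd m)),
               Ide = U_ide, Cmp = U_cmp \<rparr>"

definition U_inv_obj :: "'k uobj \<Rightarrow> 'k uobj" where
  "U_inv_obj s = (case s of (A0, A1, phi) \<Rightarrow> (A1, A0, finv A0 A1 phi))"

definition U_inv_arr :: "'k uarr \<Rightarrow> 'k uarr" where
  "U_inv_arr m = (case m of (s, t, rho0, rho1, alpha) \<Rightarrow>
     case s of (A0, A1, phi) \<Rightarrow> case t of (B0, B1, psi) \<Rightarrow>
       (U_inv_obj s, U_inv_obj t, rho1, rho0,
        (\<lambda>y\<in>Obj A1. fm (finv B0 B1 psi) (ginv B1 (alpha (fo (finv A0 A1 phi) y))))))"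

definition U_inv :: "('k uobj, 'k uarr, 'k uobj, 'k uarr) fn" where
  "U_inv = (U_inv_obj, U_inv_arr)"

definition Ut_obj :: "'k rel \<Rightarrow> 'k tobj set" where
  "Ut_obj kappa = {(A0, A1, a, phi). (A0, A1, phi) \<in> U_obj kappa \<and> a \<in> Obj A0}"

definition Ut_arr :: "'k rel \<Rightarrow> 'k tarr set" where
  "Ut_arr kappa = {((A0, A1, a, phi), (B0, B1, b, psi), rho0, rho1, tau, alpha).
      (A0, A1, a, phi) \<in> Ut_obj kappa \<and> (B0, B1, b, psi) \<in> Ut_obj kappa \<and>
      is_iso A0 B0 rho0 \<and> ext_fn A0 rho0 \<and> is_iso A1 B1 rho1 \<and> ext_fn A1 rho1 \<and>
      tau \<in> hom B0 (fo rho0 a) b \<and>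
      alpha \<in> extensional (Obj A0) \<and>
      nat_iso A0 B1 (fcomp A0 psi rho0) (fcomp A0 rho1 phi) alpha}"

definition Ut_ide :: "'k tobj \<Rightarrow> 'k tarr" where
  "Ut_ide s = (case s of (A0, A1, a, phi) \<Rightarrow>
      (s, s, fid A0, fid A1, Ide A0 a, (\<lambda>x\<in>Obj A0. Ide A1 (fo phi x))))"

definition Ut_cmp :: "'k tarr \<Rightarrow> 'k tarr \<Rightarrow> 'k tarr" where
  "Ut_cmp g f = (case f of (s, t, rho0, rho1, tau, alpha) \<Rightarrow>
     case g of (t', u, rho0', rho1', tau', alpha') \<Rightarrow>
     case s of (A0, A1, a, phi) \<Rightarrow> case u of (C0, C1, c, chi) \<Rightarrow>
       (s, u, fcomp A0 rho0' rho0, fcomp A1 rho1' rho1,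
        Cmp C0 tau' (fm rho0' tau),
        (\<lambda>x\<in>Obj A0. Cmp C1 (fm rho1' (alpha x)) (alpha' (fo rho0 x)))))"

definition Ut :: "'k rel \<Rightarrow> ('k tobj, 'k tarr) gpd" where
  "Ut kappa = \<lparr> Obj = Ut_obj kappa, Arr = Ut_arr kappa,
                Dom = (\<lambda>m. fst m), Cod = (\<lambda>m. fst (snd m)),
                Ide = Ut_ide, Cmp = Ut_cmp \<rparr>"

definition Ut_inv_obj :: "'k tobj \<Rightarrow> 'k tobj" where
  "Ut_inv_obj s = (case s of (A0, A1, a, phi) \<Rightarrow> (A1, A0, fo phi a, finv A0 A1 phi))"

definition Ut_inv_arr :: "'k tarr \<Rightarrow> 'k tarr" where
  "Ut_inv_arr m = (case m of (s, t, rho0, rho1, tau, alpha) \<Rightarrow>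
     case s of (A0, A1, a, phi) \<Rightarrow> case t of (B0, B1, b, psi) \<Rightarrow>
       (Ut_inv_obj s, Ut_inv_obj t, rho1, rho0,
        Cmp B1 (fm psi tau) (ginv B1 (alpha a)),
        (\<lambda>y\<in>Obj A1. fm (finv B0 B1 psi) (ginv B1 (alpha (fo (finv A0 A1 phi) y))))))"

definition Ut_inv :: "('k tobj, 'k tarr, 'k tobj, 'k tarr) fn" where
  "Ut_inv = (Ut_inv_obj, Ut_inv_arr)"

definition p_obj :: "'k tobj \<Rightarrow> 'k uobj" where
  "p_obj s = (case s of (A0, A1, a, phi) \<Rightarrow> (A0, A1, phi))"

definition p_arr :: "'k tarr \<Rightarrow> 'k uarr" where
  "p_arr m = (case m of (s, t, rho0, rho1, tau, alpha) \<Rightarrow> (p_obj s, p_obj t, rho0, rho1, alpha))"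

definition p :: "('k tobj, 'k tarr, 'k uobj, 'k uarr) fn" where
  "p = (p_obj, p_arr)"

definition is_pullback_of_p :: "'k rel \<Rightarrow> ('ao, 'am) gpd \<Rightarrow> ('ao, 'am, 'ao, 'am) fn \<Rightarrow>
    ('co, 'cm) gpd \<Rightarrow> ('co, 'cm, 'co, 'cm) fn \<Rightarrow> ('ao, 'am, 'co, 'cm) fn \<Rightarrow> bool" where
  "is_pullback_of_p kappa A iA C iC f \<longleftrightarrow>
     (\<exists>(g :: ('ao, 'am, 'k tobj, 'k tarr) fn) (h :: ('co, 'cm, 'k uobj, 'k uarr) fn).
        is_pullback_square A iA C iC (Ut kappa) Ut_inv (U kappa) U_inv f g h p)"

definition fiber :: "('ao, 'am) gpd \<Rightarrow> ('co, 'cm) gpd \<Rightarrow> ('ao, 'am, 'co, 'cm) fn \<Rightarrow> 'co \<Rightarrow> ('ao, 'am) gpd" where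
  "fiber A C f x = A \<lparr> Obj := {z \<in> Obj A. fo f z = x},
                       Arr := {m \<in> Arr A. fm f m = Ide C x} \<rparr>"

definition isofibration :: "('ao, 'am) gpd \<Rightarrow> ('co, 'cm) gpd \<Rightarrow> ('ao, 'am, 'co, 'cm) fn \<Rightarrow> bool" where
  "isofibration A C f \<longleftrightarrow>
     (\<forall>\<sigma>\<in>Arr C. \<forall>z\<in>Obj A. fo f z = Dom C \<sigma> \<longrightarrow>
        (\<exists>m\<in>Arr A. Dom A m = z \<and> fm f m = \<sigma>))"

definition split_cleavage :: "('ao, 'am) gpd \<Rightarrow> ('co, 'cm) gpd \<Rightarrow> ('ao, 'am, 'co, 'cm) fn \<Rightarrow>
                              ('cm \<Rightarrow> 'ao \<Rightarrow> 'am) \<Rightarrow> bool" where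
  "split_cleavage A C f c \<longleftrightarrow>
     (\<forall>\<sigma>\<in>Arr C. \<forall>z\<in>Obj A. fo f z = Dom C \<sigma> \<longrightarrow>
        c \<sigma> z \<in> Arr A \<and> Dom A (c \<sigma> z) = z \<and> fm f (c \<sigma> z) = \<sigma>) \<and>
     (\<forall>z\<in>Obj A. c (Ide C (fo f z)) z = Ide A z) \<and>
     (\<forall>\<sigma>\<in>Arr C. \<forall>\<tau>\<in>Arr C. \<forall>z\<in>Obj A. Cod C \<sigma> = Dom C \<tau> \<longrightarrow> fo f z = Dom C \<sigma> \<longrightarrow>
        c (Cmp C \<tau> \<sigma>) z = Cmp A (c \<tau> (Cod A (c \<sigma> z))) (c \<sigma> z))"

definition split_fibration :: "('ao, 'am) gpd \<Rightarrow> ('co, 'cm) gpd \<Rightarrow> ('ao, 'am, 'co, 'cm) fn \<Rightarrow> bool" where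
  "split_fibration A C f \<longleftrightarrow> isofibration A C f \<and> (\<exists>c. split_cleavage A C f c)"

end

theory Submission
  imports Defs
begin

unbundle cardinal_syntax

locale grpd = fixes G :: "('o,'m) gpd" assumes grp: "groupoid G"
begin

lemma dom_obj[simp]: "m \<in> Arr G \<Longrightarrow> Dom G m \<in> Obj G"
  and cod_obj[simp]: "m \<in> Arr G \<Longrightarrow> Cod G m \<in> Obj G"
  using grp unfolding groupoid_def by auto

lemma ide_arr[simp]: "x \<in> Obj G \<Longrightarrow> Ide G x \<in> Arr G"
  and ide_dom[simp]: "x \<in> Obj G \<Longrightarrow> Dom G (Ide G x) = x"
  and ide_cod[simp]: "x \<in> Obj G \<Longrightarrow> Cod G (Ide G x) = x"
  using grp unfolding groupoid_def hom_def by auto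

lemma cmp_arr[simp]: "f \<in> Arr G \<Longrightarrow> g \<in> Arr G \<Longrightarrow> Cod G f = Dom G g \<Longrightarrow> Cmp G g f \<in> Arr G"
  and cmp_dom[simp]: "f \<in> Arr G \<Longrightarrow> g \<in> Arr G \<Longrightarrow> Cod G f = Dom G g \<Longrightarrow> Dom G (Cmp G g f) = Dom G f"
  and cmp_cod[simp]: "f \<in> Arr G \<Longrightarrow> g \<in> Arr G \<Longrightarrow> Cod G f = Dom G g \<Longrightarrow> Cod G (Cmp G g f) = Cod G g"
  using grp unfolding groupoid_def hom_def by blast+

lemma assoc: "f \<in> Arr G \<Longrightarrow> g \<in> Arr G \<Longrightarrow> h \<in> Arr G \<Longrightarrow> Cod G f = Dom G g \<Longrightarrow> Cod G g = Dom G h \<Longrightarrow>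
   Cmp G (Cmp G h g) f = Cmp G h (Cmp G g f)"
  using grp unfolding groupoid_def by metis

lemma idl[simp]: "f \<in> Arr G \<Longrightarrow> Cmp G (Ide G (Cod G f)) f = f"
  and idr[simp]: "f \<in> Arr G \<Longrightarrow> Cmp G f (Ide G (Dom G f)) = f"
  using grp unfolding groupoid_def by blast+

lemma idl'[simp]: "f \<in> Arr G \<Longrightarrow> Cod G f = y \<Longrightarrow> Cmp G (Ide G y) f = f"
  and idr'[simp]: "f \<in> Arr G \<Longrightarrow> Dom G f = y \<Longrightarrow> Cmp G f (Ide G y) = f"
  by auto

lemma assoc'[simp]: "f \<in> Arr G \<Longrightarrow> g \<in> Arr G \<Longrightarrow> h \<in> Arr G \<Longrightarrow> Cod G f = Dom G g \<Longrightarrow> Cod G g = Dom G h \<Longrightarrow>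
   Cmp G (Cmp G h g) f = Cmp G h (Cmp G g f)"
  by (rule assoc)

lemma inv_ex: "f \<in> Arr G \<Longrightarrow> \<exists>g\<in>hom G (Cod G f) (Dom G f).
        Cmp G g f = Ide G (Dom G f) \<and> Cmp G f g = Ide G (Cod G f)"
  using grp unfolding groupoid_def by blast

lemma inv_unique:
  assumes f: "f \<in> Arr G" and g: "g \<in> hom G (Cod G f) (Dom G f)" and gf: "Cmp G g f = Ide G (Dom G f)"
  and g': "g' \<in> hom G (Cod G f) (Dom G f)" and fg': "Cmp G f g' = Ide G (Cod G f)"
  shows "g = g'"
proof -
  have ga: "g \<in> Arr G" "Dom G g = Cod G f" "Cod G g = Dom G f" using g by (auto simp: hom_def)
  have g'a: "g' \<in> Arr G" "Dom G g' = Cod G f" "Cod G g' = Dom G f" using g' by (auto simp: hom_def)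
  have "g = Cmp G g (Ide G (Cod G f))" using ga by (simp del: assoc')
  also have "\<dots> = Cmp G g (Cmp G f g')" using fg' by simp
  also have "\<dots> = Cmp G (Cmp G g f) g'" using assoc[of g' f g] f ga g'a by (simp del: assoc')
  also have "\<dots> = g'" using gf g'a by (simp del: assoc')
  finally show ?thesis .
qed

lemma ginv_prop: assumes f: "f \<in> Arr G"
  shows "ginv G f \<in> hom G (Cod G f) (Dom G f) \<and>
                      Cmp G (ginv G f) f = Ide G (Dom G f) \<and> Cmp G f (ginv G f) = Ide G (Cod G f)"
proof -
  obtain g where g: "g\<in>hom G (Cod G f) (Dom G f)" "Cmp G g f = Ide G (Dom G f)" "Cmp G f g = Ide G (Cod G f)"
    using inv_ex[OF f] by blast
  show ?thesis unfolding ginv_def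
    apply (rule theI[of _ g]) using g apply blast using inv_unique[OF f] g by blast
qed

lemma ginv_arr[simp]: "f \<in> Arr G \<Longrightarrow> ginv G f \<in> Arr G"
  and ginv_dom[simp]: "f \<in> Arr G \<Longrightarrow> Dom G (ginv G f) = Cod G f"
  and ginv_cod[simp]: "f \<in> Arr G \<Longrightarrow> Cod G (ginv G f) = Dom G f"
  and ginv_l[simp]: "f \<in> Arr G \<Longrightarrow> Cmp G (ginv G f) f = Ide G (Dom G f)"
  and ginv_r[simp]: "f \<in> Arr G \<Longrightarrow> Cmp G f (ginv G f) = Ide G (Cod G f)"
  using ginv_prop[of f] by (auto simp: hom_def)

lemma ginv_l2[simp]: "f \<in> Arr G \<Longrightarrow> x \<in> Arr G \<Longrightarrow> Cod G x = Dom G f \<Longrightarrow> Cmp G (ginv G f) (Cmp G f x) = x"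
  by (subst assoc[symmetric]) auto
lemma ginv_r2[simp]: "f \<in> Arr G \<Longrightarrow> x \<in> Arr G \<Longrightarrow> Cod G x = Cod G f \<Longrightarrow> Cmp G f (Cmp G (ginv G f) x) = x"
  by (subst assoc[symmetric]) auto

lemma ginv_eqI: "f \<in> Arr G \<Longrightarrow> g \<in> Arr G \<Longrightarrow> Dom G g = Cod G f \<Longrightarrow> Cod G g = Dom G f \<Longrightarrow>
  Cmp G g f = Ide G (Dom G f) \<Longrightarrow> ginv G f = g"
  using inv_unique[of f g "ginv G f"] by (auto simp: hom_def)

lemma ginv_eqI2: "f \<in> Arr G \<Longrightarrow> g \<in> Arr G \<Longrightarrow> Dom G g = Cod G f \<Longrightarrow> Cod G g = Dom G f \<Longrightarrow>
  Cmp G f g = Ide G (Cod G f) \<Longrightarrow> ginv G f = g"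
  using inv_unique[of f "ginv G f" g] by (auto simp: hom_def)

lemma ginv_ginv[simp]: "f \<in> Arr G \<Longrightarrow> ginv G (ginv G f) = f"
  by (rule ginv_eqI) auto

lemma ginv_ide[simp]: "x \<in> Obj G \<Longrightarrow> ginv G (Ide G x) = Ide G x"
  by (rule ginv_eqI) auto

lemma ginv_cmp: "f \<in> Arr G \<Longrightarrow> g \<in> Arr G \<Longrightarrow> Cod G f = Dom G g \<Longrightarrow>
   ginv G (Cmp G g f) = Cmp G (ginv G f) (ginv G g)"
  by (rule ginv_eqI, auto)

lemma cancel_l: "f \<in> Arr G \<Longrightarrow> g \<in> Arr G \<Longrightarrow> h \<in> Arr G \<Longrightarrow> Cod G f = Dom G h \<Longrightarrow> Cod G g = Dom G h \<Longrightarrow>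
   Cmp G h f = Cmp G h g \<Longrightarrow> f = g"
  by (metis ginv_l2)

end

lemma functor_ginv:
  assumes G: "grpd G" and H: "grpd H" and F: "is_functor G H F" and m: "m \<in> Arr G"
  shows "fm F (ginv G m) = ginv H (fm F m)"
proof -
  interpret G: grpd G by (rule G)
  interpret H: grpd H by (rule H)
  have a: "\<And>m. m \<in> Arr G \<Longrightarrow> fm F m \<in> Arr H \<and> Dom H (fm F m) = fo F (Dom G m) \<and> Cod H (fm F m) = fo F (Cod G m)"
    using F by (auto simp: is_functor_def hom_def)
  have c: "fm F (Cmp G (ginv G m) m) = Cmp H (fm F (ginv G m)) (fm F m)"
    using F m unfolding is_functor_def by (simp del: G.ginv_l)
  have i: "fm F (Ide G (Dom G m)) = Ide H (fo F (Dom G m))"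
    using F m unfolding is_functor_def by simp
  show ?thesis
    apply (rule H.ginv_eqI[symmetric])
    using m a[of m] a[of "ginv G m"] c i by auto
qed



lemma U_arr_mem: "((A0,A1,phi),(B0,B1,psi),rho0,rho1,alpha) \<in> U_arr kappa \<longleftrightarrow>
      (A0, A1, phi) \<in> U_obj kappa \<and> (B0, B1, psi) \<in> U_obj kappa \<and>
      is_iso A0 B0 rho0 \<and> ext_fn A0 rho0 \<and> is_iso A1 B1 rho1 \<and> ext_fn A1 rho1 \<and>
      alpha \<in> extensional (Obj A0) \<and>
      nat_iso A0 B1 (fcomp A0 psi rho0) (fcomp A0 rho1 phi) alpha"
  unfolding U_arr_def by simp

lemma Ut_arr_mem: "((A0,A1,a,phi),(B0,B1,b,psi),rho0,rho1,tau,alpha) \<in> Ut_arr kappa \<longleftrightarrow>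
      (A0, A1, a, phi) \<in> Ut_obj kappa \<and> (B0, B1, b, psi) \<in> Ut_obj kappa \<and>
      is_iso A0 B0 rho0 \<and> ext_fn A0 rho0 \<and> is_iso A1 B1 rho1 \<and> ext_fn A1 rho1 \<and>
      tau \<in> hom B0 (fo rho0 a) b \<and>
      alpha \<in> extensional (Obj A0) \<and>
      nat_iso A0 B1 (fcomp A0 psi rho0) (fcomp A0 rho1 phi) alpha"
  unfolding Ut_arr_def by simp

lemma Ut_obj_mem: "(A0,A1,a,phi) \<in> Ut_obj kappa \<longleftrightarrow> (A0, A1, phi) \<in> U_obj kappa \<and> a \<in> Obj A0"
  unfolding Ut_obj_def by simp

lemma U_obj_mem: "(A0,A1,phi) \<in> U_obj kappa \<longleftrightarrow> sgpd kappa A0 \<and> sgpd kappa A1 \<and>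
                                 is_iso A0 A1 phi \<and> ext_fn A0 phi"
  unfolding U_obj_def by simp

definition cp :: "'k uarr \<Rightarrow> 'k tobj \<Rightarrow> 'k tarr" where
  "cp sg z = (case sg of (s,t,rho0,rho1,alpha) \<Rightarrow> case z of (A0,A1,a,phi) \<Rightarrow> case t of (B0,B1,psi) \<Rightarrow>
     (z, (B0,B1, fo rho0 a, psi), rho0, rho1, Ide B0 (fo rho0 a), alpha))"

lemma cp_simp: "cp ((A0,A1,phi),(B0,B1,psi),rho0,rho1,alpha) (A0',A1',a,phi') =
   ((A0',A1',a,phi'), (B0,B1, fo rho0 a, psi), rho0, rho1, Ide B0 (fo rho0 a), alpha)"
  unfolding cp_def by simp

lemma iso_functor: "is_iso G H F \<Longrightarrow> is_functor G H F" by (simp add: is_iso_def)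

lemma functor_obj: "is_functor G H F \<Longrightarrow> x \<in> Obj G \<Longrightarrow> fo F x \<in> Obj H"
  by (simp add: is_functor_def)
lemma functor_arr: "is_functor G H F \<Longrightarrow> m \<in> Arr G \<Longrightarrow> fm F m \<in> Arr H"
  by (simp add: is_functor_def hom_def)
lemma functor_dom: "is_functor G H F \<Longrightarrow> m \<in> Arr G \<Longrightarrow> Dom H (fm F m) = fo F (Dom G m)"
  by (simp add: is_functor_def hom_def)
lemma functor_cod: "is_functor G H F \<Longrightarrow> m \<in> Arr G \<Longrightarrow> Cod H (fm F m) = fo F (Cod G m)"
  by (simp add: is_functor_def hom_def)
lemma functor_ide: "is_functor G H F \<Longrightarrow> x \<in> Obj G \<Longrightarrow> fm F (Ide G x) = Ide H (fo F x)"
  by (simp add: is_functor_def)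
lemma functor_cmp: "is_functor G H F \<Longrightarrow> f \<in> Arr G \<Longrightarrow> g \<in> Arr G \<Longrightarrow> Cod G f = Dom G g \<Longrightarrow>
   fm F (Cmp G g f) = Cmp H (fm F g) (fm F f)"
  by (simp add: is_functor_def)

lemma sgpd_grpd: "sgpd kappa A \<Longrightarrow> grpd A" by (simp add: sgpd_def grpd_def)

lemma cp_arr:
  assumes sg: "sg \<in> U_arr kappa" and z: "z \<in> Ut_obj kappa" and e: "p_obj z = fst sg"
  shows "cp sg z \<in> Ut_arr kappa \<and> fst (cp sg z) = z \<and> p_arr (cp sg z) = sg"
proof -
  obtain A0 A1 phi B0 B1 psi rho0 rho1 alpha where sgd: "sg = ((A0,A1,phi),(B0,B1,psi),rho0,rho1,alpha)"
    by (cases sg) auto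
  obtain a where zd: "z = (A0,A1,a,phi)" using e z by (cases z) (auto simp: sgd p_obj_def)
  have m: "(A0, A1, phi) \<in> U_obj kappa" "(B0, B1, psi) \<in> U_obj kappa" "is_iso A0 B0 rho0"
    using sg by (auto simp: sgd U_arr_mem)
  have a: "a \<in> Obj A0" using z by (simp add: zd Ut_obj_mem)
  have ra: "fo rho0 a \<in> Obj B0" using functor_obj[OF iso_functor[OF m(3)] a] .
  interpret B0: grpd B0 using m(2) by (auto simp: U_obj_mem intro: sgpd_grpd)
  show ?thesis using sg m a ra
    by (auto simp: sgd zd cp_simp Ut_arr_mem U_arr_mem Ut_obj_mem hom_def p_arr_def p_obj_def)
qed

lemma fcomp_apply: "x \<in> Obj G \<Longrightarrow> fo (fcomp G F2 F1) x = fo F2 (fo F1 x)"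
  by (simp add: fcomp_def)
lemma fcomp_apply_m: "m \<in> Arr G \<Longrightarrow> fm (fcomp G F2 F1) m = fm F2 (fm F1 m)"
  by (simp add: fcomp_def)

lemma cp_ide:
  assumes z: "z \<in> Ut_obj kappa"
  shows "cp (U_ide (p_obj z)) z = Ut_ide z"
proof -
  obtain A0 A1 a phi where zd: "z = (A0,A1,a,phi)" by (cases z) auto
  have a: "a \<in> Obj A0" using z by (simp add: zd Ut_obj_mem)
  show ?thesis using a by (simp add: zd p_obj_def U_ide_def Ut_ide_def cp_simp fid_def)
qed

lemma cp_cmp:
  assumes sg: "sg \<in> U_arr kappa" and tu: "tu \<in> U_arr kappa" and c: "fst (snd sg) = fst tu"
    and z: "z \<in> Ut_obj kappa" and e: "p_obj z = fst sg"
  shows "cp (U_cmp tu sg) z = Ut_cmp (cp tu (fst (snd (cp sg z)))) (cp sg z)"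
proof -
  obtain A0 A1 phi B0 B1 psi rho0 rho1 alpha where sgd: "sg = ((A0,A1,phi),(B0,B1,psi),rho0,rho1,alpha)"
    by (cases sg) auto
  obtain C0 C1 chi rho0' rho1' alpha' where tud: "tu = ((B0,B1,psi),(C0,C1,chi),rho0',rho1',alpha')"
    using c by (cases tu) (auto simp: sgd)
  obtain a where zd: "z = (A0,A1,a,phi)" using e z by (cases z) (auto simp: sgd p_obj_def)
  have m: "(A0, A1, phi) \<in> U_obj kappa" "(B0, B1, psi) \<in> U_obj kappa" "is_iso A0 B0 rho0"
     "(C0, C1, chi) \<in> U_obj kappa" "is_iso B0 C0 rho0'"
    using sg tu by (auto simp: sgd tud U_arr_mem)
  have a: "a \<in> Obj A0" using z by (simp add: zd Ut_obj_mem)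
  have ra: "fo rho0 a \<in> Obj B0" using functor_obj[OF iso_functor[OF m(3)] a] .
  have rra: "fo rho0' (fo rho0 a) \<in> Obj C0" using functor_obj[OF iso_functor[OF m(5)] ra] .
  interpret C0: grpd C0 using m(4) by (auto simp: U_obj_mem intro: sgpd_grpd)
  have i: "fm rho0' (Ide B0 (fo rho0 a)) = Ide C0 (fo rho0' (fo rho0 a))"
    using functor_ide[OF iso_functor[OF m(5)] ra] .
  show ?thesis using a rra i
    by (simp add: sgd tud zd cp_simp U_cmp_def Ut_cmp_def fcomp_apply)
qed

lemma p_simps[simp]: "fo p = p_obj" "fm p = p_arr" by (simp_all add: p_def)

lemma Ut_simps[simp]: "Obj (Ut kappa) = Ut_obj kappa" "Arr (Ut kappa) = Ut_arr kappa"
  "Dom (Ut kappa) = fst" "Cod (Ut kappa) = (\<lambda>m. fst (snd m))" "Ide (Ut kappa) = Ut_ide" "Cmp (Ut kappa) = Ut_cmp"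
  by (simp_all add: Ut_def)
lemma U_simps[simp]: "Obj (U kappa) = U_obj kappa" "Arr (U kappa) = U_arr kappa"
  "Dom (U kappa) = fst" "Cod (U kappa) = (\<lambda>m. fst (snd m))" "Ide (U kappa) = U_ide" "Cmp (U kappa) = U_cmp"
  by (simp_all add: U_def)

lemma pb_simps[simp]: "Obj (pb_gpd C X h q) = {(c, x). c \<in> Obj C \<and> x \<in> Obj X \<and> fo h c = fo q x}"
  "Arr (pb_gpd C X h q) = {(m, n). m \<in> Arr C \<and> n \<in> Arr X \<and> fm h m = fm q n}"
  "Dom (pb_gpd C X h q) = (\<lambda>(m, n). (Dom C m, Dom X n))"
  "Cod (pb_gpd C X h q) = (\<lambda>(m, n). (Cod C m, Cod X n))"
  "Ide (pb_gpd C X h q) = (\<lambda>(c, x). (Ide C c, Ide X x))"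
  "Cmp (pb_gpd C X h q) = (\<lambda>(g, g') (f, f'). (Cmp C g f, Cmp X g' f'))"
  by (simp_all add: pb_gpd_def)



lemma inacc_basics:
  fixes kappa :: "'k rel"
  assumes "inaccessible kappa"
  shows "Card_order kappa \<and> Field kappa = UNIV \<and> |UNIV::'k set| =o kappa \<and> \<not> finite (UNIV::'k set)"
proof -
  have co: "card_order kappa" and nl: "natLeq <o kappa" using assms by (auto simp: inaccessible_def)
  have F: "Field kappa = UNIV" and Co: "Card_order kappa" using card_order_on_Card_order[OF co] by auto
  have i: "|UNIV::'k set| =o kappa" using card_of_Field_ordIso[OF Co] F by simp
  have "natLeq \<le>o |UNIV::'k set|"
    using ordLeq_ordIso_trans[OF ordLess_imp_ordLeq[OF nl] ordIso_symmetric[OF i]] .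
  then have "\<not> finite (UNIV::'k set)" using infinite_iff_natLeq_ordLeq by blast
  then show ?thesis using F Co i by blast
qed

lemma enc_small:
  fixes kappa :: "'k rel" and S :: "'x set"
  assumes "inaccessible kappa" "|S| <o kappa"
  shows "\<exists>e::'x\<Rightarrow>'k. inj_on e S"
proof -
  have i: "|UNIV::'k set| =o kappa" using inacc_basics[OF assms(1)] by blast
  have "|S| \<le>o |UNIV::'k set|"
    using ordLess_imp_ordLeq[OF ordLess_ordIso_trans[OF assms(2) ordIso_symmetric[OF i]]] .
  then show ?thesis using card_of_ordLeq[of S "UNIV::'k set"] by blast
qed

lemma enc_union:
  fixes kappa :: "'k rel" and I :: "'i set" and B :: "'i \<Rightarrow> 'x set"
  assumes "inaccessible kappa" "|I| \<le>o kappa" "\<forall>i\<in>I. |B i| <o kappa"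
  shows "\<exists>e::'x\<Rightarrow>'k. inj_on e (\<Union>i\<in>I. B i)"
proof -
  have i: "|UNIV::'k set| =o kappa" and inf: "\<not> finite (UNIV::'k set)"
    using inacc_basics[OF assms(1)] by blast+
  have le: "\<And>T::'y set. |T| <o kappa \<Longrightarrow> |T| \<le>o |UNIV::'k set|"
    using ordLess_imp_ordLeq ordLess_ordIso_trans ordIso_symmetric[OF i] by blast
  have "|I| \<le>o |UNIV::'k set|" using ordLeq_ordIso_trans[OF assms(2) ordIso_symmetric[OF i]] .
  then have "|\<Union>i\<in>I. B i| \<le>o |UNIV::'k set|"
    using card_of_UNION_ordLeq_infinite[OF inf] le assms(3) by blast
  then show ?thesis using card_of_ordLeq[of "\<Union>i\<in>I. B i" "UNIV::'k set"] by blast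
qed

lemma times_small:
  fixes kappa :: "'k rel"
  assumes "inaccessible kappa" "|S| <o kappa" "|T| <o kappa"
  shows "|S \<times> T| \<le>o kappa"
proof -
  have Co: "Card_order kappa" and F: "Field kappa = UNIV" and inf: "\<not> finite (UNIV::'k set)"
    using inacc_basics[OF assms(1)] by blast+
  show ?thesis
    using card_of_Times_ordLeq_infinite_Field[of kappa S T] Co F inf ordLess_imp_ordLeq[OF assms(2)]
      ordLess_imp_ordLeq[OF assms(3)] by simp
qed



lemma dir1:
  fixes kappa :: "'k rel"
    and A :: "('ao, 'am) gpd" and iA :: "('ao, 'am, 'ao, 'am) fn"
    and C :: "('co, 'cm) gpd" and iC :: "('co, 'cm, 'co, 'cm) fn"
    and f :: "('ao, 'am, 'co, 'cm) fn"
    and g :: "('ao, 'am, 'k tobj, 'k tarr) fn" and h :: "('co, 'cm, 'k uobj, 'k uarr) fn"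
  assumes GA: "groupoid A" and GC: "groupoid C"
    and PB: "is_pullback_square A iA C iC (Ut kappa) Ut_inv (U kappa) U_inv f g h p"
  shows "split_fibration A C f \<and> (\<forall>x\<in>Obj C. small kappa (fiber A C f x))"
proof -
  interpret A: grpd A using GA by (simp add: grpd_def)
  interpret C: grpd C using GC by (simp add: grpd_def)
  define P where "P = pb_gpd C (Ut kappa) h p"
  define Phi where "Phi = ((\<lambda>a. (fo f a, fo g a)), (\<lambda>m. (fm f m, fm g m)))"
  have Ff: "is_functor A C f" and Fg: "is_functor A (Ut kappa) g" and Fh: "is_functor C (U kappa) h"
    and Fp: "is_functor (Ut kappa) (U kappa) p"
    and co: "\<And>a. a \<in> Obj A \<Longrightarrow> fo h (fo f a) = p_obj (fo g a)"
    and cm: "\<And>m. m \<in> Arr A \<Longrightarrow> fm h (fm f m) = p_arr (fm g m)"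
    and iso: "gpdG_iso A iA P (pb_inv iC Ut_inv) Phi"
    using PB unfolding is_pullback_square_def gpdG_mor_def P_def Phi_def by auto
  have FPhi: "is_functor A P Phi" and bo: "bij_betw (fo Phi) (Obj A) (Obj P)"
    and bm: "bij_betw (fm Phi) (Arr A) (Arr P)"
    using iso unfolding gpdG_iso_def gpdG_mor_def by auto
  have Phio: "\<And>a. fo Phi a = (fo f a, fo g a)" and Phim: "\<And>m. fm Phi m = (fm f m, fm g m)"
    by (simp_all add: Phi_def)
  have injo: "\<And>a b. a \<in> Obj A \<Longrightarrow> b \<in> Obj A \<Longrightarrow> fo f a = fo f b \<Longrightarrow> fo g a = fo g b \<Longrightarrow> a = b"
    using bo unfolding bij_betw_def inj_on_def Phio by auto
  have injm: "\<And>a b. a \<in> Arr A \<Longrightarrow> b \<in> Arr A \<Longrightarrow> fm f a = fm f b \<Longrightarrow> fm g a = fm g b \<Longrightarrow> a = b"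
    using bm unfolding bij_betw_def inj_on_def Phim by auto
  define cA where "cA = (\<lambda>sg z. the_inv_into (Arr A) (fm Phi) (sg, cp (fm h sg) (fo g z)))"
  have c1: "cA sg z \<in> Arr A \<and> fm f (cA sg z) = sg \<and> fm g (cA sg z) = cp (fm h sg) (fo g z)"
    if sg: "sg \<in> Arr C" and z: "z \<in> Obj A" and e: "fo f z = Dom C sg" for sg z
  proof -
    have hs: "fm h sg \<in> U_arr kappa" using functor_arr[OF Fh sg] by simp
    have gz: "fo g z \<in> Ut_obj kappa" using functor_obj[OF Fg z] by simp
    have e2: "p_obj (fo g z) = fst (fm h sg)"
      using functor_dom[OF Fh sg] co[OF z] e by simp
    have w: "(sg, cp (fm h sg) (fo g z)) \<in> Arr P"
      using cp_arr[OF hs gz e2] sg by (simp add: P_def)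
    have "fm Phi (cA sg z) = (sg, cp (fm h sg) (fo g z)) \<and> cA sg z \<in> Arr A"
      unfolding cA_def using w bm f_the_inv_into_f_bij_betw[OF bm w]
        the_inv_into_into[of "fm Phi" "Arr A" _ "Arr A"]
      by (simp add: bij_betw_def)
    then show ?thesis by (simp add: Phim)
  qed
  have c2: "Dom A (cA sg z) = z"
    if sg: "sg \<in> Arr C" and z: "z \<in> Obj A" and e: "fo f z = Dom C sg" for sg z
  proof -
    have hs: "fm h sg \<in> U_arr kappa" using functor_arr[OF Fh sg] by simp
    have gz: "fo g z \<in> Ut_obj kappa" using functor_obj[OF Fg z] by simp
    have e2: "p_obj (fo g z) = fst (fm h sg)"
      using functor_dom[OF Fh sg] co[OF z] e by simp
    note cc = c1[OF sg z e]
    have "fo f (Dom A (cA sg z)) = z'" if "z' = fo f z" for z'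
      using functor_dom[OF Ff, of "cA sg z"] cc e that by simp
    moreover have "fo g (Dom A (cA sg z)) = fo g z"
      using functor_dom[OF Fg, of "cA sg z"] cc cp_arr[OF hs gz e2] by simp
    ultimately show ?thesis using injo[of "Dom A (cA sg z)" z] cc z by auto
  qed
  have split: "split_cleavage A C f cA"
    unfolding split_cleavage_def
  proof (intro conjI)
    show "\<forall>sg\<in>Arr C. \<forall>z\<in>Obj A. fo f z = Dom C sg \<longrightarrow> cA sg z \<in> Arr A \<and> Dom A (cA sg z) = z \<and> fm f (cA sg z) = sg"
      using c1 c2 by blast
  next
    show "\<forall>z\<in>Obj A. cA (Ide C (fo f z)) z = Ide A z"
    proof
    fix z assume z: "z \<in> Obj A"
    let ?sg = "Ide C (fo f z)"
    have fz: "fo f z \<in> Obj C" using functor_obj[OF Ff z] .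
    have gz: "fo g z \<in> Ut_obj kappa" using functor_obj[OF Fg z] by simp
    note cc = c1[of ?sg z] c2[of ?sg z]
    have "fm g (cA ?sg z) = Ut_ide (fo g z)"
      using cc fz z functor_ide[OF Fh fz] co[OF z] cp_ide[OF gz] by simp
    also have "\<dots> = fm g (Ide A z)" using functor_ide[OF Fg z] by simp
    finally show "cA ?sg z = Ide A z"
      using injm[of "cA ?sg z" "Ide A z"] cc fz z functor_ide[OF Ff z] by simp
    qed
  next
    show "\<forall>sg\<in>Arr C. \<forall>tu\<in>Arr C. \<forall>z\<in>Obj A. Cod C sg = Dom C tu \<longrightarrow> fo f z = Dom C sg \<longrightarrow>
        cA (Cmp C tu sg) z = Cmp A (cA tu (Cod A (cA sg z))) (cA sg z)"
    proof (intro ballI impI)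
    fix sg tu z assume sg: "sg \<in> Arr C" and tu: "tu \<in> Arr C" and z: "z \<in> Obj A"
      and ct: "Cod C sg = Dom C tu" and e: "fo f z = Dom C sg"
    define m1 where "m1 = cA sg z"
    define z' where "z' = Cod A m1"
    define m2 where "m2 = cA tu z'"
    have m1: "m1 \<in> Arr A" "fm f m1 = sg" "fm g m1 = cp (fm h sg) (fo g z)" "Dom A m1 = z"
      using c1[OF sg z e] c2[OF sg z e] by (auto simp: m1_def)
    have z': "z' \<in> Obj A" "fo f z' = Dom C tu"
      using m1 functor_cod[OF Ff m1(1)] ct by (auto simp: z'_def)
    have m2: "m2 \<in> Arr A" "fm f m2 = tu" "fm g m2 = cp (fm h tu) (fo g z')" "Dom A m2 = z'"
      using c1[OF tu z'] c2[OF tu z'] by (auto simp: m2_def)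
    have hs: "fm h sg \<in> U_arr kappa" using functor_arr[OF Fh sg] by simp
    have ht: "fm h tu \<in> U_arr kappa" using functor_arr[OF Fh tu] by simp
    have gz: "fo g z \<in> Ut_obj kappa" using functor_obj[OF Fg z] by simp
    have e2: "p_obj (fo g z) = fst (fm h sg)"
      using functor_dom[OF Fh sg] co[OF z] e by simp
    have hc: "fst (snd (fm h sg)) = fst (fm h tu)"
      using functor_dom[OF Fh tu] functor_cod[OF Fh sg] ct by simp
    have gz': "fo g z' = fst (snd (cp (fm h sg) (fo g z)))"
      using functor_cod[OF Fg m1(1)] m1 by (simp add: z'_def)
    have st: "Cmp C tu sg \<in> Arr C" "fo f z = Dom C (Cmp C tu sg)" using sg tu ct e by auto
    have cm2: "Cmp A m2 m1 \<in> Arr A" using m1 m2 by (simp add: z'_def)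
    have "fm g (Cmp A m2 m1) = Ut_cmp (fm g m2) (fm g m1)"
      using functor_cmp[OF Fg m1(1) m2(1)] m2 by (simp add: z'_def)
    also have "\<dots> = cp (U_cmp (fm h tu) (fm h sg)) (fo g z)"
      using cp_cmp[OF hs ht hc gz e2] m1 m2 gz' by simp
    also have "\<dots> = cp (fm h (Cmp C tu sg)) (fo g z)"
      using functor_cmp[OF Fh sg tu ct] by simp
    also have "\<dots> = fm g (cA (Cmp C tu sg) z)" using c1[OF st(1) z st(2)] by simp
    finally have eg: "fm g (Cmp A m2 m1) = fm g (cA (Cmp C tu sg) z)" .
    have ef: "fm f (Cmp A m2 m1) = fm f (cA (Cmp C tu sg) z)"
      using functor_cmp[OF Ff m1(1) m2(1)] m1 m2 c1[OF st(1) z st(2)] by (simp add: z'_def)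
    show "cA (Cmp C tu sg) z = Cmp A (cA tu (Cod A (cA sg z))) (cA sg z)"
      using injm[OF _ cm2 ef[symmetric] eg[symmetric]] c1[OF st(1) z st(2)] by (simp add: m2_def z'_def m1_def)
    qed
  qed
  have isof: "isofibration A C f"
    unfolding isofibration_def using split unfolding split_cleavage_def by blast
  have sm: "small kappa (fiber A C f x)" if x: "x \<in> Obj C" for x
  proof -
    obtain A0 A1 phi where hx: "fo h x = (A0,A1,phi)" by (cases "fo h x") auto
    have hxU: "(A0,A1,phi) \<in> U_obj kappa" using functor_obj[OF Fh x] hx by simp
    have sA0: "small kappa A0" and gA0: "groupoid A0" using hxU by (auto simp: U_obj_mem sgpd_def)
    interpret A0: grpd A0 using gA0 by (simp add: grpd_def)
    define a3 where "a3 = (\<lambda>z. fst (snd (snd (fo g z))))"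
    have gzf: "fo g z = (A0,A1,a3 z,phi) \<and> a3 z \<in> Obj A0" if z: "z \<in> Obj A" "fo f z = x" for z
    proof -
      obtain B0 B1 b psi where gz: "fo g z = (B0,B1,b,psi)" by (cases "fo g z") auto
      have "fo g z \<in> Ut_obj kappa" using functor_obj[OF Fg z(1)] by simp
      moreover have "p_obj (fo g z) = (A0,A1,phi)" using co[OF z(1)] z(2) hx by simp
      ultimately show ?thesis using gz by (simp add: p_obj_def Ut_obj_mem a3_def)
    qed
    have o: "|Obj (fiber A C f x)| \<le>o |Obj A0|"
      unfolding card_of_ordLeq[symmetric]
    proof (intro exI conjI)
      show "inj_on a3 (Obj (fiber A C f x))"
        unfolding inj_on_def fiber_def using gzf injo by auto
      show "a3 ` Obj (fiber A C f x) \<subseteq> Obj A0" using gzf by (auto simp: fiber_def)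
    qed
    have hm: "|hom (fiber A C f x) z z'| \<le>o |hom A0 (a3 z) (a3 z')|"
      if z: "z \<in> Obj (fiber A C f x)" and z': "z' \<in> Obj (fiber A C f x)" for z z'
    proof -
      have zz: "z \<in> Obj A" "fo f z = x" "z' \<in> Obj A" "fo f z' = x" using z z' by (auto simp: fiber_def)
      define t5 where "t5 = (\<lambda>m. fst (snd (snd (snd (snd (fm g m))))))"
      have gmf: "fm g m = (fo g z, fo g z', fid A0, fid A1, t5 m, (\<lambda>y\<in>Obj A0. Ide A1 (fo phi y)))
           \<and> t5 m \<in> hom A0 (a3 z) (a3 z')"
        if m: "m \<in> hom (fiber A C f x) z z'" for m
      proof -
        have mm: "m \<in> Arr A" "fm f m = Ide C x" "Dom A m = z" "Cod A m = z'"
          using m by (auto simp: fiber_def hom_def)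
        have gm: "fm g m \<in> Ut_arr kappa" using functor_arr[OF Fg mm(1)] by simp
        have gd: "fst (fm g m) = fo g z" using functor_dom[OF Fg mm(1)] mm by simp
        have gc: "fst (snd (fm g m)) = fo g z'" using functor_cod[OF Fg mm(1)] mm by simp
        have pg: "p_arr (fm g m) = U_ide (A0,A1,phi)"
          using cm[OF mm(1)] mm(2) functor_ide[OF Fh x] hx by simp
        obtain s t r0 r1 tau al where gmd: "fm g m = (s,t,r0,r1,tau,al)" by (cases "fm g m") auto
        have st: "s = (A0,A1,a3 z,phi)" "t = (A0,A1,a3 z',phi)" "a3 z \<in> Obj A0"
          using gd gc gmd gzf[OF zz(1,2)] gzf[OF zz(3,4)] by auto
        have r: "r0 = fid A0" "r1 = fid A1" "al = (\<lambda>y\<in>Obj A0. Ide A1 (fo phi y))"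
          using pg by (simp_all add: gmd p_arr_def U_ide_def)
        have "tau \<in> hom A0 (fo (fid A0) (a3 z)) (a3 z')"
          using gm r by (simp add: gmd st Ut_arr_mem)
        then show ?thesis using gmd st r gd gc by (simp add: t5_def fid_def)
      qed
      show ?thesis unfolding card_of_ordLeq[symmetric]
      proof (intro exI conjI)
        show "inj_on t5 (hom (fiber A C f x) z z')"
        proof (rule inj_onI)
          fix m m' assume m: "m \<in> hom (fiber A C f x) z z'" and m': "m' \<in> hom (fiber A C f x) z z'"
            and e: "t5 m = t5 m'"
          have "fm g m = fm g m'" using gmf[OF m] gmf[OF m'] e by simp
          moreover have "fm f m = fm f m'" "m \<in> Arr A" "m' \<in> Arr A"
            using m m' by (auto simp: fiber_def hom_def)
          ultimately show "m = m'" using injm by blast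
        qed
        show "t5 ` hom (fiber A C f x) z z' \<subseteq> hom A0 (a3 z) (a3 z')" using gmf by blast
      qed
    qed
    show ?thesis unfolding small_def
    proof (intro conjI ballI)
      show "|Obj (fiber A C f x)| <o kappa" using o sA0 ordLeq_ordLess_trans unfolding small_def by blast
    next
      fix z z' assume z: "z \<in> Obj (fiber A C f x)" and z': "z' \<in> Obj (fiber A C f x)"
      have "a3 z \<in> Obj A0" "a3 z' \<in> Obj A0" using gzf z z' by (auto simp: fiber_def)
      then have "|hom A0 (a3 z) (a3 z')| <o kappa" using sA0 unfolding small_def by blast
      then show "|hom (fiber A C f x) z z'| <o kappa" using hm[OF z z'] ordLeq_ordLess_trans by blast
    qed
  qed
  show ?thesis using split isof sm unfolding split_fibration_def by blast
qed



lemma ball_img: "(\<forall>k\<in>e ` S. P k) = (\<forall>z\<in>S. P (e z))" by auto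
lemma bex_img: "(\<exists>k\<in>e ` S. P k) = (\<exists>z\<in>S. P (e z))" by auto

locale D2 =
  fixes kappa :: "'k rel"
    and A :: "('ao, 'am) gpd" and iA :: "('ao, 'am, 'ao, 'am) fn"
    and C :: "('co, 'cm) gpd" and iC :: "('co, 'cm, 'co, 'cm) fn"
    and f :: "('ao, 'am, 'co, 'cm) fn"
    and c :: "'cm \<Rightarrow> 'ao \<Rightarrow> 'am"
  assumes inacc: "inaccessible kappa"
    and gA: "gpdG A iA" and gC: "gpdG C iC" and mf: "gpdG_mor A iA C iC f"
    and cl: "split_cleavage A C f c"
    and smf: "\<forall>x\<in>Obj C. small kappa (fiber A C f x)"
begin

sublocale A: grpd A using gA by (simp add: gpdG_def grpd_def)
sublocale C: grpd C using gC by (simp add: gpdG_def grpd_def)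

lemma Ff: "is_functor A C f" using mf by (simp add: gpdG_mor_def)
lemma FiA: "is_functor A A iA" using gA by (simp add: gpdG_def)
lemma FiC: "is_functor C C iC" using gC by (simp add: gpdG_def)

lemma f_obj[simp]: "z \<in> Obj A \<Longrightarrow> fo f z \<in> Obj C" using Ff by (simp add: is_functor_def)
lemma f_arr[simp]: "m \<in> Arr A \<Longrightarrow> fm f m \<in> Arr C" using Ff by (simp add: is_functor_def hom_def)
lemma f_dom[simp]: "m \<in> Arr A \<Longrightarrow> Dom C (fm f m) = fo f (Dom A m)" using Ff by (simp add: is_functor_def hom_def)
lemma f_cod[simp]: "m \<in> Arr A \<Longrightarrow> Cod C (fm f m) = fo f (Cod A m)" using Ff by (simp add: is_functor_def hom_def)
lemma f_ide[simp]: "z \<in> Obj A \<Longrightarrow> fm f (Ide A z) = Ide C (fo f z)" using Ff by (simp add: is_functor_def)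
lemma f_cmp[simp]: "m \<in> Arr A \<Longrightarrow> n \<in> Arr A \<Longrightarrow> Cod A m = Dom A n \<Longrightarrow> fm f (Cmp A n m) = Cmp C (fm f n) (fm f m)"
  using Ff by (simp add: is_functor_def)
lemma f_ginv[simp]: "m \<in> Arr A \<Longrightarrow> fm f (ginv A m) = ginv C (fm f m)"
  using functor_ginv[OF A.grpd_axioms C.grpd_axioms Ff] by simp

lemma iA_obj[simp]: "z \<in> Obj A \<Longrightarrow> fo iA z \<in> Obj A" using FiA by (simp add: is_functor_def)
lemma iA_arr[simp]: "m \<in> Arr A \<Longrightarrow> fm iA m \<in> Arr A" using FiA by (simp add: is_functor_def hom_def)
lemma iA_dom[simp]: "m \<in> Arr A \<Longrightarrow> Dom A (fm iA m) = fo iA (Dom A m)" using FiA by (simp add: is_functor_def hom_def)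
lemma iA_cod[simp]: "m \<in> Arr A \<Longrightarrow> Cod A (fm iA m) = fo iA (Cod A m)" using FiA by (simp add: is_functor_def hom_def)
lemma iA_ide[simp]: "z \<in> Obj A \<Longrightarrow> fm iA (Ide A z) = Ide A (fo iA z)" using FiA by (simp add: is_functor_def)
lemma iA_cmp[simp]: "m \<in> Arr A \<Longrightarrow> n \<in> Arr A \<Longrightarrow> Cod A m = Dom A n \<Longrightarrow> fm iA (Cmp A n m) = Cmp A (fm iA n) (fm iA m)"
  using FiA by (simp add: is_functor_def)
lemma iA_ginv[simp]: "m \<in> Arr A \<Longrightarrow> fm iA (ginv A m) = ginv A (fm iA m)"
  using functor_ginv[OF A.grpd_axioms A.grpd_axioms FiA] by simp
lemma iA_inv_o[simp]: "z \<in> Obj A \<Longrightarrow> fo iA (fo iA z) = z" using gA by (simp add: gpdG_def)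
lemma iA_inv_m[simp]: "m \<in> Arr A \<Longrightarrow> fm iA (fm iA m) = m" using gA by (simp add: gpdG_def)

lemma iC_obj[simp]: "z \<in> Obj C \<Longrightarrow> fo iC z \<in> Obj C" using FiC by (simp add: is_functor_def)
lemma iC_arr[simp]: "m \<in> Arr C \<Longrightarrow> fm iC m \<in> Arr C" using FiC by (simp add: is_functor_def hom_def)
lemma iC_dom[simp]: "m \<in> Arr C \<Longrightarrow> Dom C (fm iC m) = fo iC (Dom C m)" using FiC by (simp add: is_functor_def hom_def)
lemma iC_cod[simp]: "m \<in> Arr C \<Longrightarrow> Cod C (fm iC m) = fo iC (Cod C m)" using FiC by (simp add: is_functor_def hom_def)
lemma iC_ide[simp]: "z \<in> Obj C \<Longrightarrow> fm iC (Ide C z) = Ide C (fo iC z)" using FiC by (simp add: is_functor_def)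
lemma iC_cmp[simp]: "m \<in> Arr C \<Longrightarrow> n \<in> Arr C \<Longrightarrow> Cod C m = Dom C n \<Longrightarrow> fm iC (Cmp C n m) = Cmp C (fm iC n) (fm iC m)"
  using FiC by (simp add: is_functor_def)
lemma iC_inv_o[simp]: "z \<in> Obj C \<Longrightarrow> fo iC (fo iC z) = z" using gC by (simp add: gpdG_def)
lemma iC_inv_m[simp]: "m \<in> Arr C \<Longrightarrow> fm iC (fm iC m) = m" using gC by (simp add: gpdG_def)

lemma f_iA_o[simp]: "z \<in> Obj A \<Longrightarrow> fo f (fo iA z) = fo iC (fo f z)" using mf by (simp add: gpdG_mor_def)
lemma f_iA_m[simp]: "m \<in> Arr A \<Longrightarrow> fm f (fm iA m) = fm iC (fm f m)" using mf by (simp add: gpdG_mor_def)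

lemma c_arr[simp]: "s \<in> Arr C \<Longrightarrow> z \<in> Obj A \<Longrightarrow> fo f z = Dom C s \<Longrightarrow> c s z \<in> Arr A"
  and c_dom[simp]: "s \<in> Arr C \<Longrightarrow> z \<in> Obj A \<Longrightarrow> fo f z = Dom C s \<Longrightarrow> Dom A (c s z) = z"
  and c_f[simp]: "s \<in> Arr C \<Longrightarrow> z \<in> Obj A \<Longrightarrow> fo f z = Dom C s \<Longrightarrow> fm f (c s z) = s"
  using cl unfolding split_cleavage_def by blast+

lemma c_cod_f[simp]: "s \<in> Arr C \<Longrightarrow> z \<in> Obj A \<Longrightarrow> fo f z = Dom C s \<Longrightarrow> fo f (Cod A (c s z)) = Cod C s"
  using f_cod[of "c s z"] by simp

lemma c_ide[simp]: "z \<in> Obj A \<Longrightarrow> x = fo f z \<Longrightarrow> c (Ide C x) z = Ide A z"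
  using cl unfolding split_cleavage_def by blast

lemma c_cmp: "s \<in> Arr C \<Longrightarrow> t \<in> Arr C \<Longrightarrow> z \<in> Obj A \<Longrightarrow> Cod C s = Dom C t \<Longrightarrow> fo f z = Dom C s \<Longrightarrow>
        c (Cmp C t s) z = Cmp A (c t (Cod A (c s z))) (c s z)"
  using cl unfolding split_cleavage_def by blast

definition Fo :: "'co \<Rightarrow> 'ao set" where "Fo x = {z \<in> Obj A. fo f z = x}"
definition Fa :: "'co \<Rightarrow> 'am set" where "Fa x = {m \<in> Arr A. fm f m = Ide C x \<and> x \<in> Obj C}"

lemma Fo_iff: "z \<in> Fo x \<longleftrightarrow> z \<in> Obj A \<and> fo f z = x" by (simp add: Fo_def)
lemma Fa_iff: "m \<in> Fa x \<longleftrightarrow> m \<in> Arr A \<and> fm f m = Ide C x \<and> x \<in> Obj C" by (simp add: Fa_def)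

lemma Fa_dom[simp]: "m \<in> Fa x \<Longrightarrow> Dom A m \<in> Fo x"
  using f_dom[of m] by (auto simp: Fo_iff Fa_iff)
lemma Fa_cod[simp]: "m \<in> Fa x \<Longrightarrow> Cod A m \<in> Fo x"
  using f_cod[of m] by (auto simp: Fo_iff Fa_iff)
lemma Fa_arr: "m \<in> Fa x \<Longrightarrow> m \<in> Arr A" by (simp add: Fa_iff)
lemma Fo_obj: "z \<in> Fo x \<Longrightarrow> z \<in> Obj A" by (simp add: Fo_iff)
lemma Fo_f: "z \<in> Fo x \<Longrightarrow> fo f z = x" by (simp add: Fo_iff)
lemma Fo_x: "z \<in> Fo x \<Longrightarrow> x \<in> Obj C" by (auto simp: Fo_iff)
lemma Fa_f: "m \<in> Fa x \<Longrightarrow> fm f m = Ide C x" by (simp add: Fa_iff)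
lemma Fa_ide[simp]: "z \<in> Fo x \<Longrightarrow> Ide A z \<in> Fa x" by (auto simp: Fo_iff Fa_iff)
lemma Fa_cmp[simp]: "m \<in> Fa x \<Longrightarrow> n \<in> Fa x \<Longrightarrow> Cod A m = Dom A n \<Longrightarrow> Cmp A n m \<in> Fa x"
  by (auto simp: Fa_iff)
lemma Fa_ginv[simp]: "m \<in> Fa x \<Longrightarrow> ginv A m \<in> Fa x" by (auto simp: Fa_iff)
lemma Fo_iA[simp]: "z \<in> Fo x \<Longrightarrow> fo iA z \<in> Fo (fo iC x)" by (auto simp: Fo_iff)
lemma Fa_iA[simp]: "m \<in> Fa x \<Longrightarrow> fm iA m \<in> Fa (fo iC x)" by (auto simp: Fa_iff)

lemma fiber_obj: "Obj (fiber A C f x) = Fo x" by (simp add: fiber_def Fo_def)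
lemma fiber_arr: "x \<in> Obj C \<Longrightarrow> Arr (fiber A C f x) = Fa x" by (simp add: fiber_def Fa_def)

lemma Fo_small: "|Fo x| <o kappa"
proof (cases "x \<in> Obj C")
  case True then show ?thesis using smf fiber_obj unfolding small_def by metis
next
  case False then have "Fo x = {}" by (auto simp: Fo_iff)
  moreover have "natLeq <o kappa" using inacc by (simp add: inaccessible_def)
  ultimately show ?thesis using ordLeq_ordLess_trans[OF card_of_empty1[of natLeq]] natLeq_Card_order by simp
qed

lemma eo_ex: "\<exists>e::'ao \<Rightarrow> 'k. inj_on e (Fo x)" using enc_small[OF inacc Fo_small] .

lemma em_ex: "\<exists>e::'am \<Rightarrow> 'k. inj_on e (Fa x)"
proof (cases "x \<in> Obj C")
  case False then have "Fa x = {}" by (auto simp: Fa_iff)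
  then show ?thesis by simp
next
  case True
  have s: "small kappa (fiber A C f x)" using smf True by blast
  have sub: "Fa x \<subseteq> (\<Union>i\<in>Fo x \<times> Fo x. hom (fiber A C f x) (fst i) (snd i))"
  proof
    fix m assume m: "m \<in> Fa x"
    then have "(Dom A m, Cod A m) \<in> Fo x \<times> Fo x" "m \<in> hom (fiber A C f x) (Dom A m) (Cod A m)"
      using True by (simp, simp add: hom_def fiber_def Fa_def)
    then show "m \<in> (\<Union>i\<in>Fo x \<times> Fo x. hom (fiber A C f x) (fst i) (snd i))" by force
  qed
  have "|Fo x \<times> Fo x| \<le>o kappa" using times_small[OF inacc Fo_small Fo_small] .
  moreover have "\<forall>i\<in>Fo x \<times> Fo x. |hom (fiber A C f x) (fst i) (snd i)| <o kappa"
    using s unfolding small_def fiber_obj by auto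
  ultimately obtain e :: "'am \<Rightarrow> 'k" where "inj_on e (\<Union>i\<in>Fo x \<times> Fo x. hom (fiber A C f x) (fst i) (snd i))"
    using enc_union[OF inacc, of "Fo x \<times> Fo x" "\<lambda>i. hom (fiber A C f x) (fst i) (snd i)"] by blast
  then show ?thesis using inj_on_subset[OF _ sub] by blast
qed

definition eo :: "'co \<Rightarrow> 'ao \<Rightarrow> 'k" where "eo x = (SOME e. inj_on e (Fo x))"
definition em :: "'co \<Rightarrow> 'am \<Rightarrow> 'k" where "em x = (SOME e. inj_on e (Fa x))"
definition do :: "'co \<Rightarrow> 'k \<Rightarrow> 'ao" where "do x = the_inv_into (Fo x) (eo x)"
definition dm :: "'co \<Rightarrow> 'k \<Rightarrow> 'am" where "dm x = the_inv_into (Fa x) (em x)"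

lemma eo_inj: "inj_on (eo x) (Fo x)" unfolding eo_def using eo_ex by (rule someI_ex)
lemma em_inj: "inj_on (em x) (Fa x)" unfolding em_def using em_ex by (rule someI_ex)

lemma do_eo[simp]: "z \<in> Fo x \<Longrightarrow> do x (eo x z) = z"
  unfolding do_def using eo_inj the_inv_into_f_f by fast
lemma dm_em[simp]: "m \<in> Fa x \<Longrightarrow> dm x (em x m) = m"
  unfolding dm_def using em_inj the_inv_into_f_f by fast
lemma eo_eq[simp]: "z \<in> Fo x \<Longrightarrow> z' \<in> Fo x \<Longrightarrow> eo x z = eo x z' \<longleftrightarrow> z = z'"
  using eo_inj unfolding inj_on_def by blast
lemma em_eq[simp]: "m \<in> Fa x \<Longrightarrow> m' \<in> Fa x \<Longrightarrow> em x m = em x m' \<longleftrightarrow> m = m'"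
  using em_inj unfolding inj_on_def by blast

end


context D2 begin

definition K :: "'co \<Rightarrow> 'k G" where
 "K x = \<lparr>Obj = eo x ` Fo x, Arr = em x ` Fa x,
   Dom = (\<lambda>k\<in>em x ` Fa x. eo x (Dom A (dm x k))),
   Cod = (\<lambda>k\<in>em x ` Fa x. eo x (Cod A (dm x k))),
   Ide = (\<lambda>k\<in>eo x ` Fo x. em x (Ide A (do x k))),
   Cmp = (\<lambda>g h. if h \<in> em x ` Fa x \<and> g \<in> em x ` Fa x \<and> eo x (Cod A (dm x h)) = eo x (Dom A (dm x g))
                then em x (Cmp A (dm x g) (dm x h)) else undefined)\<rparr>"

lemma K_Obj: "Obj (K x) = eo x ` Fo x" by (simp add: K_def)
lemma K_Arr: "Arr (K x) = em x ` Fa x" by (simp add: K_def)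
lemma K_obj_in[simp]: "z \<in> Fo x \<Longrightarrow> eo x z \<in> Obj (K x)" by (simp add: K_def)
lemma K_arr_in[simp]: "m \<in> Fa x \<Longrightarrow> em x m \<in> Arr (K x)" by (simp add: K_def)
lemma K_dom[simp]: "m \<in> Fa x \<Longrightarrow> Dom (K x) (em x m) = eo x (Dom A m)" by (simp add: K_def)
lemma K_cod[simp]: "m \<in> Fa x \<Longrightarrow> Cod (K x) (em x m) = eo x (Cod A m)" by (simp add: K_def)
lemma K_ide[simp]: "z \<in> Fo x \<Longrightarrow> Ide (K x) (eo x z) = em x (Ide A z)" by (simp add: K_def)
lemma K_cmp[simp]: "m \<in> Fa x \<Longrightarrow> n \<in> Fa x \<Longrightarrow> Cod A m = Dom A n \<Longrightarrow>
   Cmp (K x) (em x n) (em x m) = em x (Cmp A n m)"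
  by (simp add: K_def)

lemma K_groupoid: "groupoid (K x)"
  unfolding groupoid_def K_Obj K_Arr ball_img hom_def
proof (intro conjI ballI impI)
  fix m assume "m \<in> Fa x" then show "Dom (K x) (em x m) \<in> eo x ` Fo x" "Cod (K x) (em x m) \<in> eo x ` Fo x" by auto
next
  fix z assume "z \<in> Fo x" then show "Ide (K x) (eo x z) \<in> {m \<in> em x ` Fa x. Dom (K x) m = eo x z \<and> Cod (K x) m = eo x z}"
    by (auto simp: Fo_iff)
next
  fix m n assume m: "m \<in> Fa x" and n: "n \<in> Fa x" and e: "Cod (K x) (em x m) = Dom (K x) (em x n)"
  then have e': "Cod A m = Dom A n" by simp
  show "Cmp (K x) (em x n) (em x m) \<in> {k \<in> em x ` Fa x. Dom (K x) k = Dom (K x) (em x m) \<and> Cod (K x) k = Cod (K x) (em x n)}"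
    using m n e' Fa_arr[OF m] Fa_arr[OF n] by auto
next
  fix m n l assume m: "m \<in> Fa x" and n: "n \<in> Fa x" and l: "l \<in> Fa x"
    and e1: "Cod (K x) (em x m) = Dom (K x) (em x n)" and e2: "Cod (K x) (em x n) = Dom (K x) (em x l)"
  then have e': "Cod A m = Dom A n" "Cod A n = Dom A l" by simp_all
  show "Cmp (K x) (em x l) (Cmp (K x) (em x n) (em x m)) = Cmp (K x) (Cmp (K x) (em x l) (em x n)) (em x m)"
    using m n l e' Fa_arr[OF m] Fa_arr[OF n] Fa_arr[OF l] by simp
next
  fix m assume m: "m \<in> Fa x"
  show "Cmp (K x) (Ide (K x) (Cod (K x) (em x m))) (em x m) = em x m"
    "Cmp (K x) (em x m) (Ide (K x) (Dom (K x) (em x m))) = em x m"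
    using m Fa_arr[OF m] by simp_all
next
  fix m assume m: "m \<in> Fa x"
  show "\<exists>k\<in>{k \<in> em x ` Fa x. Dom (K x) k = Cod (K x) (em x m) \<and> Cod (K x) k = Dom (K x) (em x m)}.
            Cmp (K x) k (em x m) = Ide (K x) (Dom (K x) (em x m)) \<and>
            Cmp (K x) (em x m) k = Ide (K x) (Cod (K x) (em x m))"
    apply (rule bexI[of _ "em x (ginv A m)"])
    using m Fa_arr[OF m] by auto
qed

lemma K_canonical: "canonical (K x)"
  unfolding canonical_def by (auto simp: K_def)

lemma K_grpd: "grpd (K x)" using K_groupoid by (simp add: grpd_def)

lemma K_ginv[simp]: "m \<in> Fa x \<Longrightarrow> ginv (K x) (em x m) = em x (ginv A m)"
  using grpd.ginv_eqI[OF K_grpd[of x], of "em x m" "em x (ginv A m)"] Fa_arr[of m x] by simp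

end


context D2 begin

lemma K_small: "small kappa (K x)"
  unfolding small_def
proof (intro conjI ballI)
  show "|Obj (K x)| <o kappa" unfolding K_Obj using ordLeq_ordLess_trans[OF card_of_image Fo_small] .
next
  fix k k' assume k: "k \<in> Obj (K x)" and k': "k' \<in> Obj (K x)"
  obtain z z' where z: "z \<in> Fo x" "k = eo x z" and z': "z' \<in> Fo x" "k' = eo x z'" using k k' by (auto simp: K_Obj)
  have x: "x \<in> Obj C" using z Fo_x by blast
  have "hom (K x) k k' \<subseteq> em x ` hom (fiber A C f x) z z'"
  proof
    fix n assume n: "n \<in> hom (K x) k k'"
    then obtain m where m: "m \<in> Fa x" "n = em x m" by (auto simp: hom_def K_Arr)
    have "Dom A m = z" "Cod A m = z'" using n m z z' by (auto simp: hom_def)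
    then show "n \<in> em x ` hom (fiber A C f x) z z'" using m x Fa_arr[OF m(1)] Fa_f[OF m(1)] by (auto simp: hom_def fiber_arr fiber_def)
  qed
  then have "|hom (K x) k k'| \<le>o |hom (fiber A C f x) z z'|"
    using card_of_mono1 card_of_image ordLeq_transitive by blast
  moreover have "|hom (fiber A C f x) z z'| <o kappa" using smf x z z' unfolding small_def fiber_obj by blast
  ultimately show "|hom (K x) k k'| <o kappa" using ordLeq_ordLess_trans by blast
qed

lemma K_sgpd: "sgpd kappa (K x)" by (simp add: sgpd_def K_groupoid K_canonical K_small)

definition mk :: "'co \<Rightarrow> 'co \<Rightarrow> ('ao \<Rightarrow> 'ao) \<Rightarrow> ('am \<Rightarrow> 'am) \<Rightarrow> 'k F" where
  "mk x y T1 T2 = ((\<lambda>k\<in>eo x ` Fo x. eo y (T1 (do x k))), (\<lambda>k\<in>em x ` Fa x. em y (T2 (dm x k))))"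

lemma mk_o[simp]: "z \<in> Fo x \<Longrightarrow> fo (mk x y T1 T2) (eo x z) = eo y (T1 z)" by (simp add: mk_def)
lemma mk_m[simp]: "m \<in> Fa x \<Longrightarrow> fm (mk x y T1 T2) (em x m) = em y (T2 m)" by (simp add: mk_def)
lemma mk_ext: "ext_fn (K x) (mk x y T1 T2)" by (simp add: mk_def ext_fn_def K_Obj K_Arr)

definition ffun :: "'co \<Rightarrow> 'co \<Rightarrow> ('ao \<Rightarrow> 'ao) \<Rightarrow> ('am \<Rightarrow> 'am) \<Rightarrow> bool" where
  "ffun x y T1 T2 \<longleftrightarrow> (\<forall>z\<in>Fo x. T1 z \<in> Fo y) \<and>
     (\<forall>m\<in>Fa x. T2 m \<in> Fa y \<and> Dom A (T2 m) = T1 (Dom A m) \<and> Cod A (T2 m) = T1 (Cod A m)) \<and>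
     (\<forall>z\<in>Fo x. T2 (Ide A z) = Ide A (T1 z)) \<and>
     (\<forall>m\<in>Fa x. \<forall>n\<in>Fa x. Cod A m = Dom A n \<longrightarrow> T2 (Cmp A n m) = Cmp A (T2 n) (T2 m))"

lemma mk_functor: assumes "ffun x y T1 T2" shows "is_functor (K x) (K y) (mk x y T1 T2)"
  using assms unfolding is_functor_def ffun_def K_Obj K_Arr ball_img hom_def
  by (auto simp: Fa_arr)

lemma mk_iso: assumes "ffun x y T1 T2" "bij_betw T1 (Fo x) (Fo y)" "bij_betw T2 (Fa x) (Fa y)"
  shows "is_iso (K x) (K y) (mk x y T1 T2)"
proof -
  have "bij_betw (fo (mk x y T1 T2)) (Obj (K x)) (Obj (K y))"
  proof -
    have "bij_betw (eo y \<circ> T1 \<circ> do x) (eo x ` Fo x) (eo y ` Fo y)"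
    proof (rule bij_betw_trans[OF _ bij_betw_trans[OF assms(2)]])
      show "bij_betw (do x) (eo x ` Fo x) (Fo x)" unfolding do_def using eo_inj
        by (rule bij_betw_the_inv_into[OF inj_on_imp_bij_betw])
      show "bij_betw (eo y) (Fo y) (eo y ` Fo y)" using eo_inj by (rule inj_on_imp_bij_betw)
    qed
    then show ?thesis unfolding K_Obj
      by (rule bij_betw_cong[THEN iffD1, rotated]) (auto simp: mk_def)
  qed
  moreover have "bij_betw (fm (mk x y T1 T2)) (Arr (K x)) (Arr (K y))"
  proof -
    have "bij_betw (em y \<circ> T2 \<circ> dm x) (em x ` Fa x) (em y ` Fa y)"
    proof (rule bij_betw_trans[OF _ bij_betw_trans[OF assms(3)]])
      show "bij_betw (dm x) (em x ` Fa x) (Fa x)" unfolding dm_def using em_inj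
        by (rule bij_betw_the_inv_into[OF inj_on_imp_bij_betw])
      show "bij_betw (em y) (Fa y) (em y ` Fa y)" using em_inj by (rule inj_on_imp_bij_betw)
    qed
    then show ?thesis unfolding K_Arr
      by (rule bij_betw_cong[THEN iffD1, rotated]) (auto simp: mk_def)
  qed
  ultimately show ?thesis using mk_functor[OF assms(1)] by (simp add: is_iso_def)
qed

lemma mk_fcomp: assumes "\<forall>z\<in>Fo x. T1 z \<in> Fo y" "\<forall>m\<in>Fa x. T2 m \<in> Fa y"
  shows "fcomp (K x) (mk y w S1 S2) (mk x y T1 T2) = mk x w (S1 \<circ> T1) (S2 \<circ> T2)"
  using assms by (auto simp: fcomp_def mk_def K_Obj K_Arr intro!: ext)

lemma mk_fid: "fid (K x) = mk x x id id"
  by (auto simp: fid_def mk_def K_Obj K_Arr intro!: ext)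

lemma mk_cong: "(\<And>z. z \<in> Fo x \<Longrightarrow> T1 z = T1' z) \<Longrightarrow> (\<And>m. m \<in> Fa x \<Longrightarrow> T2 m = T2' m) \<Longrightarrow>
   mk x y T1 T2 = mk x y T1' T2'"
  by (auto simp: mk_def intro!: ext)

lemma mk_finv:
  assumes T1: "\<forall>z\<in>Fo x. T1 z \<in> Fo y" and T2: "\<forall>m\<in>Fa x. T2 m \<in> Fa y"
    and S1: "\<forall>z\<in>Fo y. S1 z \<in> Fo x" and S2: "\<forall>m\<in>Fa y. S2 m \<in> Fa x"
    and i1: "\<forall>z\<in>Fo x. S1 (T1 z) = z" and i2: "\<forall>m\<in>Fa x. S2 (T2 m) = m"
    and j1: "\<forall>z\<in>Fo y. T1 (S1 z) = z" and j2: "\<forall>m\<in>Fa y. T2 (S2 m) = m"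
  shows "finv (K x) (K y) (mk x y T1 T2) = mk y x S1 S2"
proof -
  have io: "inj_on (fo (mk x y T1 T2)) (Obj (K x))"
    unfolding K_Obj inj_on_def using T1 i1 by (auto simp: ball_img) (metis)
  have im: "inj_on (fm (mk x y T1 T2)) (Arr (K x))"
    unfolding K_Arr inj_on_def using T2 i2 by (auto simp: ball_img) (metis)
  have o: "the_inv_into (Obj (K x)) (fo (mk x y T1 T2)) (eo y w) = eo x (S1 w)" if w: "w \<in> Fo y" for w
    by (rule the_inv_into_f_eq[OF io]) (use w S1 j1 in auto)
  have m: "the_inv_into (Arr (K x)) (fm (mk x y T1 T2)) (em y n) = em x (S2 n)" if n: "n \<in> Fa y" for n
    by (rule the_inv_into_f_eq[OF im]) (use n S2 j2 in auto)
  show ?thesis unfolding finv_def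
    using o m by (auto simp: mk_def K_Obj K_Arr intro!: ext)
qed

lemma mk_nat:
  assumes F1: "ffun x w T1 T2" and F2: "ffun x w S1 S2"
    and b: "\<forall>z\<in>Fo x. b z \<in> Fa w \<and> Dom A (b z) = T1 z \<and> Cod A (b z) = S1 z"
    and nat: "\<forall>m\<in>Fa x. Cmp A (S2 m) (b (Dom A m)) = Cmp A (b (Cod A m)) (T2 m)"
  shows "nat_iso (K x) (K w) (mk x w T1 T2) (mk x w S1 S2) (\<lambda>k\<in>Obj (K x). em w (b (do x k)))"
  unfolding nat_iso_def K_Obj K_Arr ball_img hom_def
proof (intro conjI ballI)
  fix z assume z: "z \<in> Fo x"
  then show "(\<lambda>k\<in>eo x ` Fo x. em w (b (do x k))) (eo x z)
         \<in> {m \<in> em w ` Fa w. Dom (K w) m = fo (mk x w T1 T2) (eo x z) \<and> Cod (K w) m = fo (mk x w S1 S2) (eo x z)}"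
    using b by auto
next
  fix m assume m: "m \<in> Fa x"
  have a: "Dom A m \<in> Fo x" "Cod A m \<in> Fo x" using m by auto
  show "Cmp (K w) (fm (mk x w S1 S2) (em x m)) ((\<lambda>k\<in>eo x ` Fo x. em w (b (do x k))) (Dom (K x) (em x m))) =
         Cmp (K w) ((\<lambda>k\<in>eo x ` Fo x. em w (b (do x k))) (Cod (K x) (em x m))) (fm (mk x w T1 T2) (em x m))"
    using m a b nat F1 F2 unfolding ffun_def by auto
qed

end


context D2 begin

lemma Fo_D: "z \<in> Fo x \<Longrightarrow> z \<in> Obj A \<and> fo f z = x \<and> x \<in> Obj C"
  using Fo_x by (auto simp: Fo_iff)
lemma Fa_D: "m \<in> Fa x \<Longrightarrow> m \<in> Arr A \<and> fm f m = Ide C x \<and> x \<in> Obj C \<and> fo f (Dom A m) = x \<and> fo f (Cod A m) = x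
   \<and> Dom A m \<in> Fo x \<and> Cod A m \<in> Fo x"
  using Fa_dom[of m x] Fa_cod[of m x] by (auto simp: Fa_iff Fo_iff)

definition To :: "'cm \<Rightarrow> 'ao \<Rightarrow> 'ao" where "To s z = Cod A (c s z)"
definition Tm :: "'cm \<Rightarrow> 'am \<Rightarrow> 'am" where
  "Tm s m = Cmp A (c s (Cod A m)) (Cmp A m (ginv A (c s (Dom A m))))"

lemma To_Fo: assumes s: "s \<in> Arr C" and z: "z \<in> Fo (Dom C s)" shows "To s z \<in> Fo (Cod C s)"
  using Fo_D[OF z] s by (simp add: To_def Fo_iff)

lemma Tm_props: assumes s: "s \<in> Arr C" and m: "m \<in> Fa (Dom C s)"
  shows "Tm s m \<in> Fa (Cod C s) \<and> Dom A (Tm s m) = To s (Dom A m) \<and> Cod A (Tm s m) = To s (Cod A m)"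
proof -
  note M = Fa_D[OF m]
  have "Tm s m \<in> Arr A" "Dom A (Tm s m) = To s (Dom A m)" "Cod A (Tm s m) = To s (Cod A m)"
    using M s by (simp_all add: Tm_def To_def)
  moreover have "fm f (Tm s m) = Ide C (Cod C s)" using M s by (simp add: Tm_def)
  ultimately show ?thesis using s by (simp add: Fa_iff)
qed

lemma ffun_T: assumes s: "s \<in> Arr C" shows "ffun (Dom C s) (Cod C s) (To s) (Tm s)"
proof -
  have 1: "\<forall>z\<in>Fo (Dom C s). To s z \<in> Fo (Cod C s)" using To_Fo s by blast
  have 2: "\<forall>m\<in>Fa (Dom C s). Tm s m \<in> Fa (Cod C s) \<and> Dom A (Tm s m) = To s (Dom A m) \<and> Cod A (Tm s m) = To s (Cod A m)"
    using Tm_props s by blast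
  have 3: "\<forall>z\<in>Fo (Dom C s). Tm s (Ide A z) = Ide A (To s z)"
  proof
    fix z assume z: "z \<in> Fo (Dom C s)"
    show "Tm s (Ide A z) = Ide A (To s z)" using Fo_D[OF z] s by (simp add: Tm_def To_def)
  qed
  have 4: "\<forall>m\<in>Fa (Dom C s). \<forall>n\<in>Fa (Dom C s). Cod A m = Dom A n \<longrightarrow> Tm s (Cmp A n m) = Cmp A (Tm s n) (Tm s m)"
  proof (intro ballI impI)
    fix m n assume m: "m \<in> Fa (Dom C s)" and n: "n \<in> Fa (Dom C s)" and e: "Cod A m = Dom A n"
    note M = Fa_D[OF m] and N = Fa_D[OF n]
    show "Tm s (Cmp A n m) = Cmp A (Tm s n) (Tm s m)" using M N e s by (simp add: Tm_def)
  qed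
  show ?thesis unfolding ffun_def using 1 2 3 4 by blast
qed

lemma To_ide: "z \<in> Fo x \<Longrightarrow> To (Ide C x) z = z"
  using Fo_D[of z x] by (simp add: To_def)
lemma Tm_ide: "m \<in> Fa x \<Longrightarrow> Tm (Ide C x) m = m"
  using Fa_D[of m x] by (simp add: Tm_def)

lemma To_cmp: assumes s: "s \<in> Arr C" and t: "t \<in> Arr C" and e: "Cod C s = Dom C t" and z: "z \<in> Fo (Dom C s)"
  shows "To (Cmp C t s) z = To t (To s z)"
  using Fo_D[OF z] s t e c_cmp[of s t z] by (simp add: To_def)

lemma Tm_cmp: assumes s: "s \<in> Arr C" and t: "t \<in> Arr C" and e: "Cod C s = Dom C t" and m: "m \<in> Fa (Dom C s)"
  shows "Tm (Cmp C t s) m = Tm t (Tm s m)"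
proof -
  note M = Fa_D[OF m]
  have 1: "c (Cmp C t s) (Cod A m) = Cmp A (c t (To s (Cod A m))) (c s (Cod A m))"
    using c_cmp[of s t "Cod A m"] M s t e by (simp add: To_def)
  have 2: "c (Cmp C t s) (Dom A m) = Cmp A (c t (To s (Dom A m))) (c s (Dom A m))"
    using c_cmp[of s t "Dom A m"] M s t e by (simp add: To_def)
  have d: "Dom A (Tm s m) = To s (Dom A m)" "Cod A (Tm s m) = To s (Cod A m)" "Tm s m \<in> Arr A"
    using Tm_props[OF s m] Fa_D by auto
  show ?thesis
    unfolding Tm_def[of "Cmp C t s"] 1 2 unfolding Tm_def[of t] d
    using M s t e by (simp add: Tm_def To_def A.ginv_cmp)
qed

end


context D2 begin

lemma ffun_comp: assumes "ffun x y T1 T2" "ffun y w S1 S2" shows "ffun x w (S1 \<circ> T1) (S2 \<circ> T2)"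
proof -
  have a: "\<forall>m\<in>Fa x. T2 m \<in> Fa y" "\<forall>z\<in>Fo x. T1 z \<in> Fo y" using assms(1) unfolding ffun_def by auto
  show ?thesis using assms(1,2) a unfolding ffun_def
    by (auto simp: Fa_dom Fa_cod)
qed

lemma T_bij: assumes s: "s \<in> Arr C"
  shows "bij_betw (To s) (Fo (Dom C s)) (Fo (Cod C s)) \<and> bij_betw (Tm s) (Fa (Dom C s)) (Fa (Cod C s))"
proof -
  let ?t = "ginv C s"
  have t: "?t \<in> Arr C" "Dom C ?t = Cod C s" "Cod C ?t = Dom C s" using s by auto
  have l: "Cmp C ?t s = Ide C (Dom C s)" and r: "Cmp C s ?t = Ide C (Cod C s)" using s by auto
  have o1: "\<forall>z\<in>Fo (Dom C s). To ?t (To s z) = z"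
    using To_cmp[OF s t(1)] l To_ide t by (metis C.ginv_dom)
  have o2: "\<forall>z\<in>Fo (Cod C s). To s (To ?t z) = z"
    using To_cmp[OF t(1) s] r To_ide t by metis
  have m1: "\<forall>m\<in>Fa (Dom C s). Tm ?t (Tm s m) = m"
    using Tm_cmp[OF s t(1)] l Tm_ide t by (metis C.ginv_dom)
  have m2: "\<forall>m\<in>Fa (Cod C s). Tm s (Tm ?t m) = m"
    using Tm_cmp[OF t(1) s] r Tm_ide t by metis
  have i1: "To s ` Fo (Dom C s) \<subseteq> Fo (Cod C s)" "To ?t ` Fo (Cod C s) \<subseteq> Fo (Dom C s)"
    using To_Fo[OF s] To_Fo[OF t(1)] t by auto
  have i2: "Tm s ` Fa (Dom C s) \<subseteq> Fa (Cod C s)" "Tm ?t ` Fa (Cod C s) \<subseteq> Fa (Dom C s)"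
    using Tm_props[OF s] Tm_props[OF t(1)] t by auto
  show ?thesis using bij_betw_byWitness[OF o1 o2 i1] bij_betw_byWitness[OF m1 m2 i2] by blast
qed

definition R :: "'cm \<Rightarrow> 'k F" where "R s = mk (Dom C s) (Cod C s) (To s) (Tm s)"

lemma R_iso: "s \<in> Arr C \<Longrightarrow> is_iso (K (Dom C s)) (K (Cod C s)) (R s)"
  unfolding R_def using mk_iso ffun_T T_bij by blast
lemma R_ext: "ext_fn (K (Dom C s)) (R s)" unfolding R_def by (rule mk_ext)

definition I :: "'co \<Rightarrow> 'k F" where "I x = mk x (fo iC x) (fo iA) (fm iA)"

lemma I_ffun: assumes x: "x \<in> Obj C" shows "ffun x (fo iC x) (fo iA) (fm iA)"
  unfolding ffun_def
proof (intro conjI)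
  show "\<forall>z\<in>Fo x. fo iA z \<in> Fo (fo iC x)" by simp
  show "\<forall>m\<in>Fa x. fm iA m \<in> Fa (fo iC x) \<and> Dom A (fm iA m) = fo iA (Dom A m) \<and> Cod A (fm iA m) = fo iA (Cod A m)"
    using Fa_arr by simp
  show "\<forall>z\<in>Fo x. fm iA (Ide A z) = Ide A (fo iA z)" using Fo_obj by simp
  show "\<forall>m\<in>Fa x. \<forall>n\<in>Fa x. Cod A m = Dom A n \<longrightarrow> fm iA (Cmp A n m) = Cmp A (fm iA n) (fm iA m)"
    using Fa_arr by simp
qed

lemma iA_bij: assumes x: "x \<in> Obj C"
  shows "bij_betw (fo iA) (Fo x) (Fo (fo iC x)) \<and> bij_betw (fm iA) (Fa x) (Fa (fo iC x))"
proof -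
  have "\<forall>z\<in>Fo x. fo iA (fo iA z) = z" "\<forall>z\<in>Fo (fo iC x). fo iA (fo iA z) = z" using Fo_obj by auto
  moreover have "fo iA ` Fo x \<subseteq> Fo (fo iC x)" "fo iA ` Fo (fo iC x) \<subseteq> Fo x"
    using Fo_iA[of _ "fo iC x"] x by auto
  moreover have "\<forall>m\<in>Fa x. fm iA (fm iA m) = m" "\<forall>m\<in>Fa (fo iC x). fm iA (fm iA m) = m" using Fa_arr by auto
  moreover have "fm iA ` Fa x \<subseteq> Fa (fo iC x)" "fm iA ` Fa (fo iC x) \<subseteq> Fa x"
    using Fa_iA[of _ "fo iC x"] x by auto
  ultimately show ?thesis using bij_betw_byWitness by metis
qed

lemma I_iso: "x \<in> Obj C \<Longrightarrow> is_iso (K x) (K (fo iC x)) (I x)"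
  unfolding I_def using mk_iso I_ffun iA_bij by blast
lemma I_ext: "ext_fn (K x) (I x)" unfolding I_def by (rule mk_ext)

lemma I_iC: "x \<in> Obj C \<Longrightarrow> I (fo iC x) = mk (fo iC x) x (fo iA) (fm iA)"
  by (simp add: I_def)

lemma I_finv: assumes x: "x \<in> Obj C" shows "finv (K x) (K (fo iC x)) (I x) = I (fo iC x)"
  unfolding I_iC[OF x] unfolding I_def
  by (rule mk_finv) (use x Fo_iA[of _ "fo iC x"] Fa_iA[of _ "fo iC x"] Fo_obj Fa_arr in auto)

definition ho :: "'co \<Rightarrow> 'k uobj" where "ho x = (K x, K (fo iC x), I x)"

lemma ho_U: "x \<in> Obj C \<Longrightarrow> ho x \<in> U_obj kappa"
  by (simp add: ho_def U_obj_mem K_sgpd I_iso I_ext)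

definition beta :: "'cm \<Rightarrow> 'ao \<Rightarrow> 'am" where
  "beta s z = Cmp A (c (fm iC s) (fo iA z)) (ginv A (fm iA (c s z)))"

lemma beta_props: assumes s: "s \<in> Arr C" and z: "z \<in> Fo (Dom C s)"
  shows "beta s z \<in> Fa (fo iC (Cod C s)) \<and> Dom A (beta s z) = fo iA (To s z) \<and> Cod A (beta s z) = To (fm iC s) (fo iA z)"
proof -
  note Z = Fo_D[OF z]
  have "beta s z \<in> Arr A" "Dom A (beta s z) = fo iA (To s z)" "Cod A (beta s z) = To (fm iC s) (fo iA z)"
    "fm f (beta s z) = Ide C (fo iC (Cod C s))"
    using Z s by (simp_all add: beta_def To_def)
  then show ?thesis using s by (simp add: Fa_iff)
qed

lemma beta_nat: assumes s: "s \<in> Arr C" and m: "m \<in> Fa (Dom C s)"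
  shows "Cmp A (Tm (fm iC s) (fm iA m)) (beta s (Dom A m)) = Cmp A (beta s (Cod A m)) (fm iA (Tm s m))"
  using Fa_D[OF m] s by (simp add: beta_def Tm_def)

definition al :: "'cm \<Rightarrow> 'k \<Rightarrow> 'k" where
  "al s = (\<lambda>k\<in>Obj (K (Dom C s)). em (fo iC (Cod C s)) (beta s (do (Dom C s) k)))"

lemma al_ext: "al s \<in> extensional (Obj (K (Dom C s)))" by (simp add: al_def)

lemma al_nat: assumes s: "s \<in> Arr C"
  shows "nat_iso (K (Dom C s)) (K (fo iC (Cod C s))) (fcomp (K (Dom C s)) (I (Cod C s)) (R s))
            (fcomp (K (Dom C s)) (R (fm iC s)) (I (Dom C s))) (al s)"
proof -
  let ?x = "Dom C s" and ?y = "Cod C s"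
  have x: "?x \<in> Obj C" "?y \<in> Obj C" using s by auto
  have e1: "fcomp (K ?x) (I ?y) (R s) = mk ?x (fo iC ?y) (fo iA \<circ> To s) (fm iA \<circ> Tm s)"
    unfolding I_def R_def by (rule mk_fcomp) (use To_Fo[OF s] Tm_props[OF s] in auto)
  have e2: "fcomp (K ?x) (R (fm iC s)) (I ?x) = mk ?x (fo iC ?y) (To (fm iC s) \<circ> fo iA) (Tm (fm iC s) \<circ> fm iA)"
    unfolding I_def R_def using s by (simp add: mk_fcomp)
  have f1: "ffun ?x (fo iC ?y) (fo iA \<circ> To s) (fm iA \<circ> Tm s)"
    using ffun_comp[OF ffun_T[OF s] I_ffun[OF x(2)]] .
  have f2: "ffun ?x (fo iC ?y) (To (fm iC s) \<circ> fo iA) (Tm (fm iC s) \<circ> fm iA)"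
  proof -
    have "ffun (fo iC ?x) (fo iC ?y) (To (fm iC s)) (Tm (fm iC s))" using ffun_T[of "fm iC s"] s by simp
    then show ?thesis using ffun_comp[OF I_ffun[OF x(1)]] by blast
  qed
  show ?thesis unfolding e1 e2 al_def
    by (rule mk_nat[OF f1 f2]) (use beta_props[OF s] beta_nat[OF s] in auto)
qed

definition hm :: "'cm \<Rightarrow> 'k uarr" where
  "hm s = (ho (Dom C s), ho (Cod C s), R s, R (fm iC s), al s)"

lemma hm_U: assumes s: "s \<in> Arr C" shows "hm s \<in> U_arr kappa"
proof -
  have isr: "is_iso (K (fo iC (Dom C s))) (K (fo iC (Cod C s))) (R (fm iC s))"
    "ext_fn (K (fo iC (Dom C s))) (R (fm iC s))"
    using R_iso[of "fm iC s"] R_ext[of "fm iC s"] s by simp_all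
  show ?thesis using s isr al_nat[OF s] al_ext[of s] R_iso[OF s] R_ext[of s] ho_U[of "Dom C s"] ho_U[of "Cod C s"]
    by (simp add: hm_def ho_def U_arr_mem)
qed

end


context D2 begin

lemma beta_cmp: assumes s: "s \<in> Arr C" and t: "t \<in> Arr C" and e: "Cod C s = Dom C t" and w: "w \<in> Fo (Dom C s)"
  shows "beta (Cmp C t s) w = Cmp A (Tm (fm iC t) (beta s w)) (beta t (To s w))"
proof -
  note W = Fo_D[OF w]
  have b: "beta s w \<in> Arr A" "Dom A (beta s w) = fo iA (To s w)" "Cod A (beta s w) = To (fm iC s) (fo iA w)"
    using beta_props[OF s w] Fa_arr by auto
  have c1: "c (Cmp C (fm iC t) (fm iC s)) (fo iA w) = Cmp A (c (fm iC t) (To (fm iC s) (fo iA w))) (c (fm iC s) (fo iA w))"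
    using c_cmp[of "fm iC s" "fm iC t" "fo iA w"] W s t e by (simp add: To_def)
  have c2: "c (Cmp C t s) w = Cmp A (c t (To s w)) (c s w)"
    using c_cmp[of s t w] W s t e by (simp add: To_def)
  show ?thesis
    unfolding beta_def[of "Cmp C t s"] c2 using s t e W c1 b
    unfolding Tm_def by (simp add: beta_def To_def A.ginv_cmp)
qed

lemma beta_inv: assumes s: "s \<in> Arr C" and u: "u \<in> Fo (fo iC (Dom C s))"
  shows "beta (fm iC s) u = fm iA (ginv A (beta s (fo iA u)))"
proof -
  have u': "fo iA u \<in> Fo (Dom C s)" using Fo_iA[OF u] s by simp
  note U = Fo_D[OF u] and U' = Fo_D[OF u']
  show ?thesis using s U U' by (simp add: beta_def A.ginv_cmp)
qed

lemma R_ide: assumes x: "x \<in> Obj C" shows "R (Ide C x) = fid (K x)"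
proof -
  have "R (Ide C x) = mk x x (To (Ide C x)) (Tm (Ide C x))" using x by (simp add: R_def)
  also have "\<dots> = mk x x id id" by (rule mk_cong) (simp_all add: To_ide Tm_ide)
  finally show ?thesis by (simp add: mk_fid)
qed

lemma R_cmp: assumes s: "s \<in> Arr C" and t: "t \<in> Arr C" and e: "Cod C s = Dom C t"
  shows "R (Cmp C t s) = fcomp (K (Dom C s)) (R t) (R s)"
proof -
  have "fcomp (K (Dom C s)) (R t) (R s) = mk (Dom C s) (Cod C t) (To t \<circ> To s) (Tm t \<circ> Tm s)"
    unfolding R_def e[symmetric] by (rule mk_fcomp) (use To_Fo[OF s] Tm_props[OF s] in auto)
  also have "\<dots> = mk (Dom C s) (Cod C t) (To (Cmp C t s)) (Tm (Cmp C t s))"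
    by (rule mk_cong) (use To_cmp[OF s t e] Tm_cmp[OF s t e] in auto)
  finally have "fcomp (K (Dom C s)) (R t) (R s) = mk (Dom C s) (Cod C t) (To (Cmp C t s)) (Tm (Cmp C t s))" .
  moreover have "R (Cmp C t s) = mk (Dom C s) (Cod C t) (To (Cmp C t s)) (Tm (Cmp C t s))"
    unfolding R_def using s t e by simp
  ultimately show ?thesis by simp
qed

definition h :: "('co, 'cm, 'k uobj, 'k uarr) fn" where "h = (ho, hm)"

lemma hm_ide: assumes x: "x \<in> Obj C" shows "hm (Ide C x) = U_ide (ho x)"
proof -
  have "al (Ide C x) = (\<lambda>k\<in>Obj (K x). Ide (K (fo iC x)) (fo (I x) k))"
  proof (rule ext)
    fix k show "al (Ide C x) k = (\<lambda>k\<in>Obj (K x). Ide (K (fo iC x)) (fo (I x) k)) k"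
    proof (cases "k \<in> Obj (K x)")
      case True then obtain z where z: "z \<in> Fo x" "k = eo x z" by (auto simp: K_Obj)
      note Z = Fo_D[OF z(1)]
      have "beta (Ide C x) z = Ide A (fo iA z)" using Z by (simp add: beta_def)
      then show ?thesis using z x Z by (simp add: al_def I_def)
    next
      case False then show ?thesis using x by (simp add: al_def)
    qed
  qed
  then show ?thesis using x by (simp add: hm_def U_ide_def ho_def R_ide)
qed

lemma hm_cmp: assumes s: "s \<in> Arr C" and t: "t \<in> Arr C" and e: "Cod C s = Dom C t"
  shows "hm (Cmp C t s) = U_cmp (hm t) (hm s)"
proof -
  let ?x = "Dom C s" and ?y = "Cod C s" and ?z = "Cod C t"
  have ri: "R (fm iC (Cmp C t s)) = fcomp (K (fo iC ?x)) (R (fm iC t)) (R (fm iC s))"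
    using R_cmp[of "fm iC s" "fm iC t"] s t e by simp
  have al: "al (Cmp C t s) = (\<lambda>k\<in>Obj (K ?x). Cmp (K (fo iC ?z)) (fm (R (fm iC t)) (al s k)) (al t (fo (R s) k)))"
  proof (rule ext)
    fix k show "al (Cmp C t s) k = (\<lambda>k\<in>Obj (K ?x). Cmp (K (fo iC ?z)) (fm (R (fm iC t)) (al s k)) (al t (fo (R s) k))) k"
    proof (cases "k \<in> Obj (K ?x)")
      case True then obtain w where w: "w \<in> Fo ?x" "k = eo ?x w" by (auto simp: K_Obj)
      have bs: "beta s w \<in> Fa (fo iC ?y)" "Dom A (beta s w) = fo iA (To s w)" using beta_props[OF s w(1)] by auto
      have tw: "To s w \<in> Fo (Dom C t)" using To_Fo[OF s w(1)] e by simp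
      have bt: "beta t (To s w) \<in> Fa (fo iC ?z)" "Cod A (beta t (To s w)) = To (fm iC t) (fo iA (To s w))"
        using beta_props[OF t tw] by auto
      have tm: "Tm (fm iC t) (beta s w) \<in> Fa (fo iC ?z)" "Dom A (Tm (fm iC t) (beta s w)) = To (fm iC t) (fo iA (To s w))"
        using Tm_props[of "fm iC t" "beta s w"] t bs e by simp_all
      show ?thesis using True w s t e bs bt tw tm
        by (simp add: al_def R_def beta_cmp[OF s t e w(1)])
    next
      case False then show ?thesis using s t e by (simp add: al_def)
    qed
  qed
  show ?thesis using s t e ri al by (simp add: hm_def U_cmp_def ho_def R_cmp)
qed

lemma ho_inv: "x \<in> Obj C \<Longrightarrow> ho (fo iC x) = U_inv_obj (ho x)"
  by (simp add: ho_def U_inv_obj_def I_finv)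

lemma hm_inv: assumes s: "s \<in> Arr C" shows "hm (fm iC s) = U_inv_arr (hm s)"
proof -
  let ?x = "Dom C s" and ?y = "Cod C s"
  have x: "?x \<in> Obj C" "?y \<in> Obj C" using s by auto
  have al: "al (fm iC s) = (\<lambda>v\<in>Obj (K (fo iC ?x)). fm (I (fo iC ?y)) (ginv (K (fo iC ?y)) (al s (fo (I (fo iC ?x)) v))))"
  proof (rule ext)
    fix v show "al (fm iC s) v = (\<lambda>v\<in>Obj (K (fo iC ?x)). fm (I (fo iC ?y)) (ginv (K (fo iC ?y)) (al s (fo (I (fo iC ?x)) v)))) v"
    proof (cases "v \<in> Obj (K (fo iC ?x))")
      case True then obtain u where u: "u \<in> Fo (fo iC ?x)" "v = eo (fo iC ?x) u" by (auto simp: K_Obj)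
      have u': "fo iA u \<in> Fo ?x" using Fo_iA[OF u(1)] x by simp
      have b: "beta s (fo iA u) \<in> Fa (fo iC ?y)" using beta_props[OF s u'] by auto
      have b': "ginv A (beta s (fo iA u)) \<in> Fa (fo iC ?y)" using b by simp
      have b'': "fm iA (ginv A (beta s (fo iA u))) \<in> Fa ?y" using Fa_iA[OF b'] x by simp
      show ?thesis using True u u' b b' b'' s x
        by (simp add: al_def I_iC beta_inv[OF s u(1)])
    next
      case False then show ?thesis using s by (simp add: al_def)
    qed
  qed
  show ?thesis using s x al by (simp add: hm_def U_inv_arr_def ho_def U_inv_obj_def I_finv)
qed

lemma h_mor: "gpdG_mor C iC (U kappa) U_inv h"
  unfolding gpdG_mor_def is_functor_def h_def U_inv_def fst_conv snd_conv U_simps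
proof (intro conjI ballI impI)
  fix x assume "x \<in> Obj C" then show "ho x \<in> U_obj kappa" by (rule ho_U)
next
  fix s assume s: "s \<in> Arr C"
  then show "hm s \<in> hom (U kappa) (ho (Dom C s)) (ho (Cod C s))"
    using hm_U[OF s] by (simp add: hom_def hm_def)
next
  fix x assume "x \<in> Obj C" then show "hm (Ide C x) = U_ide (ho x)" by (rule hm_ide)
next
  fix s t assume "s \<in> Arr C" "t \<in> Arr C" "Cod C s = Dom C t"
  then show "hm (Cmp C t s) = U_cmp (hm t) (hm s)" by (rule hm_cmp)
next
  fix x assume "x \<in> Obj C" then show "ho (fo iC x) = U_inv_obj (ho x)" by (rule ho_inv)
next
  fix s assume "s \<in> Arr C" then show "hm (fm iC s) = U_inv_arr (hm s)" by (rule hm_inv)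
qed

end


context D2 begin

definition go :: "'ao \<Rightarrow> 'k tobj" where
  "go z = (K (fo f z), K (fo iC (fo f z)), eo (fo f z) z, I (fo f z))"

definition gn :: "'am \<Rightarrow> 'am" where
  "gn m = Cmp A m (ginv A (c (fm f m) (Dom A m)))"

definition gtau :: "'am \<Rightarrow> 'k" where
  "gtau m = em (Cod C (fm f m)) (gn m)"

definition gm :: "'am \<Rightarrow> 'k tarr" where
  "gm m = (go (Dom A m), go (Cod A m), R (fm f m), R (fm iC (fm f m)), gtau m, al (fm f m))"

definition g :: "('ao, 'am, 'k tobj, 'k tarr) fn" where "g = (go, gm)"

lemma I_o[simp]: "z \<in> Obj A \<Longrightarrow> fo (I (fo f z)) (eo (fo f z) z) = eo (fo iC (fo f z)) (fo iA z)"
  by (simp add: I_def Fo_iff)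

lemma go_Ut: "z \<in> Obj A \<Longrightarrow> go z \<in> Ut_obj kappa"
  using ho_U[of "fo f z"] by (simp add: go_def Ut_obj_mem ho_def Fo_iff)

lemma gn_props: assumes m: "m \<in> Arr A"
  shows "gn m \<in> Fa (fo f (Cod A m)) \<and> Dom A (gn m) = To (fm f m) (Dom A m) \<and> Cod A (gn m) = Cod A m"
proof -
  have "gn m \<in> Arr A" "Dom A (gn m) = To (fm f m) (Dom A m)" "Cod A (gn m) = Cod A m"
     "fm f (gn m) = Ide C (fo f (Cod A m))"
    using m by (simp_all add: gn_def To_def)
  then show ?thesis using m by (simp add: Fa_iff)
qed

lemma R_o: "s \<in> Arr C \<Longrightarrow> z \<in> Fo (Dom C s) \<Longrightarrow> fo (R s) (eo (Dom C s) z) = eo (Cod C s) (To s z)"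
  by (simp add: R_def)
lemma R_m: "s \<in> Arr C \<Longrightarrow> m \<in> Fa (Dom C s) \<Longrightarrow> fm (R s) (em (Dom C s) m) = em (Cod C s) (Tm s m)"
  by (simp add: R_def)

lemma gm_Ut: assumes m: "m \<in> Arr A" shows "gm m \<in> Ut_arr kappa"
proof -
  let ?s = "fm f m"
  have s: "?s \<in> Arr C" using m by simp
  have hU: "hm ?s \<in> U_arr kappa" using hm_U[OF s] .
  have dz: "Dom A m \<in> Fo (Dom C ?s)" using m by (simp add: Fo_iff)
  have tau: "gtau m \<in> hom (K (Cod C ?s)) (fo (R ?s) (eo (Dom C ?s) (Dom A m))) (eo (Cod C ?s) (Cod A m))"
    using gn_props[OF m] R_o[OF s dz] m by (simp add: gtau_def hom_def)
  show ?thesis using hU m go_Ut[of "Dom A m"] go_Ut[of "Cod A m"] tau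
    by (simp add: gm_def go_def hm_def ho_def U_arr_mem Ut_arr_mem Ut_obj_mem)
qed

lemma al_ide: "x \<in> Obj C \<Longrightarrow> al (Ide C x) = (\<lambda>k\<in>Obj (K x). Ide (K (fo iC x)) (fo (I x) k))"
  using hm_ide[of x] by (simp add: hm_def U_ide_def ho_def)

lemma al_cmp: assumes s: "s \<in> Arr C" and t: "t \<in> Arr C" and e: "Cod C s = Dom C t"
  shows "al (Cmp C t s) = (\<lambda>k\<in>Obj (K (Dom C s)). Cmp (K (fo iC (Cod C t))) (fm (R (fm iC t)) (al s k)) (al t (fo (R s) k)))"
  using hm_cmp[OF s t e] s t e by (simp add: hm_def U_cmp_def ho_def)

lemma R_iC_cmp: assumes s: "s \<in> Arr C" and t: "t \<in> Arr C" and e: "Cod C s = Dom C t"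
  shows "R (Cmp C (fm iC t) (fm iC s)) = fcomp (K (fo iC (Dom C s))) (R (fm iC t)) (R (fm iC s))"
  using hm_cmp[OF s t e] s t e by (simp add: hm_def U_cmp_def ho_def)

lemma al_inv: assumes s: "s \<in> Arr C"
  shows "al (fm iC s) = (\<lambda>v\<in>Obj (K (fo iC (Dom C s))). fm (finv (K (Cod C s)) (K (fo iC (Cod C s))) (I (Cod C s)))
      (ginv (K (fo iC (Cod C s))) (al s (fo (finv (K (Dom C s)) (K (fo iC (Dom C s))) (I (Dom C s))) v))))"
  using hm_inv[OF s] s by (simp add: hm_def U_inv_arr_def ho_def U_inv_obj_def)

lemma gm_ide: assumes z: "z \<in> Obj A" shows "gm (Ide A z) = Ut_ide (go z)"
proof -
  have x: "fo f z \<in> Obj C" using z by simp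
  have "gtau (Ide A z) = Ide (K (fo f z)) (eo (fo f z) z)"
    using z by (simp add: gtau_def gn_def Fo_iff)
  then show ?thesis using z x
    by (simp add: gm_def Ut_ide_def go_def R_ide al_ide)
qed

lemma gm_cmp: assumes m: "m \<in> Arr A" and n: "n \<in> Arr A" and e: "Cod A m = Dom A n"
  shows "gm (Cmp A n m) = Ut_cmp (gm n) (gm m)"
proof -
  let ?s = "fm f m" and ?t = "fm f n"
  have s: "?s \<in> Arr C" and t: "?t \<in> Arr C" and e': "Cod C ?s = Dom C ?t" using m n e by auto
  have dz: "Dom A m \<in> Fo (Dom C ?s)" using m by (simp add: Fo_iff)
  have gnm: "gn m \<in> Fa (Dom C ?t)" "Dom A (gn m) = To ?s (Dom A m)" "Cod A (gn m) = Cod A m"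
    using gn_props[OF m] e e' m by auto
  have gnn: "gn n \<in> Fa (Cod C ?t)" "Dom A (gn n) = To ?t (Dom A n)" "Cod A (gn n) = Cod A n"
    using gn_props[OF n] n by auto
  have tm: "Tm ?t (gn m) \<in> Fa (Cod C ?t)" "Cod A (Tm ?t (gn m)) = To ?t (Cod A m)"
    using Tm_props[OF t gnm(1)] gnm by auto
  have key: "gn (Cmp A n m) = Cmp A (gn n) (Tm ?t (gn m))"
  proof -
    have c: "c (Cmp C ?t ?s) (Dom A m) = Cmp A (c ?t (Cod A (c ?s (Dom A m)))) (c ?s (Dom A m))"
      using c_cmp[of ?s ?t "Dom A m"] s t e' m by simp
    show ?thesis using m n e c gnm(2) unfolding gn_def Tm_def To_def
      by (simp add: A.ginv_cmp)
  qed
  have tau: "gtau (Cmp A n m) = Cmp (K (Cod C ?t)) (gtau n) (fm (R ?t) (gtau m))"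
    using key gnm gnn tm R_m[OF t gnm(1)] m n e e' by (simp add: gtau_def To_def)
  show ?thesis using m n e s t e' tau
    by (simp add: gm_def Ut_cmp_def go_def R_cmp al_cmp R_iC_cmp)
qed

lemma go_inv: assumes z: "z \<in> Obj A" shows "go (fo iA z) = Ut_inv_obj (go z)"
proof -
  have x: "fo f z \<in> Obj C" using z by simp
  have "fo (I (fo f z)) (eo (fo f z) z) = eo (fo iC (fo f z)) (fo iA z)"
    using z by (simp add: I_def Fo_iff)
  then show ?thesis using z x by (simp add: go_def Ut_inv_obj_def I_finv)
qed

lemma gm_inv: assumes m: "m \<in> Arr A" shows "gm (fm iA m) = Ut_inv_arr (gm m)"
proof -
  let ?s = "fm f m" and ?x = "fo f (Dom A m)" and ?y = "fo f (Cod A m)"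
  have s: "?s \<in> Arr C" using m by simp
  have x: "?x \<in> Obj C" "?y \<in> Obj C" using m by auto
  have dz: "Dom A m \<in> Fo (Dom C ?s)" using m by (simp add: Fo_iff)
  have gnm: "gn m \<in> Fa ?y" using gn_props[OF m] by auto
  have b: "beta ?s (Dom A m) \<in> Fa (fo iC ?y)" "Cod A (beta ?s (Dom A m)) = To (fm iC ?s) (fo iA (Dom A m))"
    "Dom A (beta ?s (Dom A m)) = fo iA (To ?s (Dom A m))"
    using beta_props[OF s dz] m by auto
  have gi: "gn (fm iA m) = Cmp A (fm iA (gn m)) (ginv A (beta ?s (Dom A m)))"
    using m unfolding gn_def beta_def by (simp add: A.ginv_cmp)
  have tau: "gtau (fm iA m) = Cmp (K (fo iC ?y)) (fm (I ?y) (gtau m)) (ginv (K (fo iC ?y)) (al ?s (eo ?x (Dom A m))))"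
  proof -
    have "al ?s (eo ?x (Dom A m)) = em (fo iC ?y) (beta ?s (Dom A m))"
      using m dz by (simp add: al_def)
    moreover have "fm (I ?y) (gtau m) = em (fo iC ?y) (fm iA (gn m))"
      using gnm m by (simp add: I_def gtau_def)
    moreover have "Dom A (fm iA (gn m)) = fo iA (To ?s (Dom A m))" "fm iA (gn m) \<in> Fa (fo iC ?y)"
      using gn_props[OF m] gnm x by (auto simp: Fa_arr)
    ultimately show ?thesis using gi b m Fa_arr[OF b(1)] by (simp add: gtau_def)
  qed
  show ?thesis using m x s tau
    by (simp add: gm_def Ut_inv_arr_def go_def Ut_inv_obj_def I_finv al_inv)
qed

lemma g_mor: "gpdG_mor A iA (Ut kappa) Ut_inv g"
  unfolding gpdG_mor_def is_functor_def g_def Ut_inv_def fst_conv snd_conv Ut_simps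
proof (intro conjI ballI impI)
  fix x assume "x \<in> Obj A" then show "go x \<in> Ut_obj kappa" by (rule go_Ut)
next
  fix m assume m: "m \<in> Arr A"
  then show "gm m \<in> hom (Ut kappa) (go (Dom A m)) (go (Cod A m))"
    using gm_Ut[OF m] by (simp add: hom_def gm_def)
next
  fix x assume "x \<in> Obj A" then show "gm (Ide A x) = Ut_ide (go x)" by (rule gm_ide)
next
  fix m n assume "m \<in> Arr A" "n \<in> Arr A" "Cod A m = Dom A n"
  then show "gm (Cmp A n m) = Ut_cmp (gm n) (gm m)" by (rule gm_cmp)
next
  fix x assume "x \<in> Obj A" then show "go (fo iA x) = Ut_inv_obj (go x)" by (rule go_inv)
next
  fix m assume "m \<in> Arr A" then show "gm (fm iA m) = Ut_inv_arr (gm m)" by (rule gm_inv)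
qed

end


lemma p_mor: "gpdG_mor (Ut kappa) Ut_inv (U kappa) U_inv p"
  unfolding gpdG_mor_def is_functor_def Ut_inv_def U_inv_def fst_conv snd_conv Ut_simps U_simps p_simps
proof (intro conjI ballI impI)
  fix x assume "x \<in> Ut_obj kappa" then show "p_obj x \<in> U_obj kappa"
    by (cases x) (auto simp: Ut_obj_mem p_obj_def)
next
  fix m assume m: "m \<in> Ut_arr kappa"
  obtain A0 A1 a phi B0 B1 b psi r0 r1 tau al where md: "m = ((A0,A1,a,phi),(B0,B1,b,psi),r0,r1,tau,al)"
    by (cases m) auto
  show "p_arr m \<in> hom (U kappa) (p_obj (fst m)) (p_obj (fst (snd m)))"
    using m by (simp add: md hom_def p_arr_def p_obj_def Ut_arr_mem U_arr_mem Ut_obj_mem)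
next
  fix x assume "x \<in> Ut_obj kappa" then show "p_arr (Ut_ide x) = U_ide (p_obj x)"
    by (cases x) (simp add: p_arr_def p_obj_def Ut_ide_def U_ide_def)
next
  fix m n assume "m \<in> Ut_arr kappa" "n \<in> Ut_arr kappa" "fst (snd m) = fst n"
  obtain s t r0 r1 tau al where md: "m = (s,t,r0,r1,tau,al)" by (cases m) auto
  obtain s' t' r0' r1' tau' al' where nd: "n = (s',t',r0',r1',tau',al')" by (cases n) auto
  obtain A0 A1 a phi where sd: "s = (A0,A1,a,phi)" by (cases s) auto
  obtain C0 C1 cc chi where td: "t' = (C0,C1,cc,chi)" by (cases t') auto
  show "p_arr (Ut_cmp n m) = U_cmp (p_arr n) (p_arr m)"
    by (simp add: md nd sd td p_arr_def p_obj_def Ut_cmp_def U_cmp_def)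
next
  fix x assume "x \<in> Ut_obj kappa" then show "p_obj (Ut_inv_obj x) = U_inv_obj (p_obj x)"
    by (cases x) (simp add: p_obj_def Ut_inv_obj_def U_inv_obj_def)
next
  fix m assume "m \<in> Ut_arr kappa"
  obtain s t r0 r1 tau al where md: "m = (s,t,r0,r1,tau,al)" by (cases m) auto
  obtain A0 A1 a phi where sd: "s = (A0,A1,a,phi)" by (cases s) auto
  obtain B0 B1 b psi where td: "t = (B0,B1,b,psi)" by (cases t) auto
  show "p_arr (Ut_inv_arr m) = U_inv_arr (p_arr m)"
    by (simp add: md sd td p_arr_def p_obj_def Ut_inv_arr_def U_inv_arr_def Ut_inv_obj_def U_inv_obj_def)
qed

context D2 begin

lemma go_inj: "a \<in> Obj A \<Longrightarrow> b \<in> Obj A \<Longrightarrow> fo f a = fo f b \<Longrightarrow> go a = go b \<Longrightarrow> a = b"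
  by (simp add: go_def Fo_iff)

lemma pb_mor: "gpdG_mor A iA (pb_gpd C (Ut kappa) h p) (pb_inv iC Ut_inv) ((\<lambda>a. (fo f a, go a)), (\<lambda>m. (fm f m, gm m)))"
proof -
  have e: "\<And>m. m \<in> Arr A \<Longrightarrow> hm (fm f m) = p_arr (gm m)"
    by (simp add: hm_def gm_def p_arr_def p_obj_def go_def ho_def)
  show ?thesis
  unfolding gpdG_mor_def is_functor_def pb_inv_def pb_simps Ut_simps p_simps h_def Ut_inv_def
  apply (simp only: fst_conv snd_conv)
  apply (intro conjI ballI impI)
  subgoal for a using go_Ut[of a] by (simp add: go_def ho_def p_obj_def)
  subgoal for m using gm_Ut[of m] e[of m] by (simp add: hom_def gm_def)
  subgoal for a using gm_ide[of a] by simp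
  subgoal for m n using gm_cmp[of m n] by simp
  subgoal for a using go_inv[of a] by simp
  subgoal for m using gm_inv[of m] by simp
  done
qed

lemma pb_bij_o: "bij_betw (\<lambda>a. (fo f a, go a)) (Obj A) (Obj (pb_gpd C (Ut kappa) h p))"
  unfolding bij_betw_def
proof
  show "inj_on (\<lambda>a. (fo f a, go a)) (Obj A)" using go_inj by (auto simp: inj_on_def)
  show "(\<lambda>a. (fo f a, go a)) ` Obj A = Obj (pb_gpd C (Ut kappa) h p)"
  proof
    show "(\<lambda>a. (fo f a, go a)) ` Obj A \<subseteq> Obj (pb_gpd C (Ut kappa) h p)"
      using go_Ut by (auto simp: h_def go_def ho_def p_obj_def)
  next
    show "Obj (pb_gpd C (Ut kappa) h p) \<subseteq> (\<lambda>a. (fo f a, go a)) ` Obj A"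
    proof
      fix w assume w: "w \<in> Obj (pb_gpd C (Ut kappa) h p)"
      obtain x t where wd: "w = (x, t)" by (cases w) auto
      obtain B0 B1 k psi where td: "t = (B0,B1,k,psi)" by (cases t) auto
      have x: "x \<in> Obj C" and t: "t \<in> Ut_obj kappa" and e: "ho x = p_obj t" using w by (auto simp: wd h_def)
      have td': "t = (K x, K (fo iC x), k, I x)" using e by (simp add: td ho_def p_obj_def)
      have "k \<in> Obj (K x)" using t by (simp add: td' Ut_obj_mem)
      then obtain a where a: "a \<in> Fo x" "k = eo x a" by (auto simp: K_Obj)
      have "w = (fo f a, go a)" using a by (simp add: wd td' go_def Fo_iff)
      then show "w \<in> (\<lambda>a. (fo f a, go a)) ` Obj A" using a by (auto simp: Fo_iff)
    qed
  qed
qed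

lemma gn_cancel: assumes m: "m \<in> Arr A" shows "Cmp A (gn m) (c (fm f m) (Dom A m)) = m"
  using m by (simp add: gn_def)

lemma pb_bij_m: "bij_betw (\<lambda>m. (fm f m, gm m)) (Arr A) (Arr (pb_gpd C (Ut kappa) h p))"
  unfolding bij_betw_def
proof
  show "inj_on (\<lambda>m. (fm f m, gm m)) (Arr A)"
  proof (rule inj_onI)
    fix m m' assume m: "m \<in> Arr A" and m': "m' \<in> Arr A" and e: "(fm f m, gm m) = (fm f m', gm m')"
    have ef: "fm f m = fm f m'" and eg: "gm m = gm m'" using e by auto
    have dd: "Dom A m = Dom A m'"
      using go_inj[of "Dom A m" "Dom A m'"] eg m m' f_dom[OF m] f_dom[OF m'] ef by (simp add: gm_def)
    have cc: "Cod A m = Cod A m'"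
      using go_inj[of "Cod A m" "Cod A m'"] eg m m' f_cod[OF m] f_cod[OF m'] ef by (simp add: gm_def)
    have "gtau m = gtau m'" using eg by (simp add: gm_def)
    then have "gn m = gn m'" using gn_props[OF m] gn_props[OF m'] ef cc m m' by (simp add: gtau_def)
    then show "m = m'" using gn_cancel[OF m] gn_cancel[OF m'] ef dd by metis
  qed
  show "(\<lambda>m. (fm f m, gm m)) ` Arr A = Arr (pb_gpd C (Ut kappa) h p)"
  proof
    show "(\<lambda>m. (fm f m, gm m)) ` Arr A \<subseteq> Arr (pb_gpd C (Ut kappa) h p)"
      using gm_Ut by (auto simp: h_def hm_def gm_def p_arr_def p_obj_def go_def ho_def)
  next
    show "Arr (pb_gpd C (Ut kappa) h p) \<subseteq> (\<lambda>m. (fm f m, gm m)) ` Arr A"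
    proof
      fix w assume w: "w \<in> Arr (pb_gpd C (Ut kappa) h p)"
      obtain s t where wd: "w = (s, t)" by (cases w) auto
      have s: "s \<in> Arr C" and t: "t \<in> Ut_arr kappa" and e: "hm s = p_arr t" using w by (auto simp: wd h_def)
      let ?x = "Dom C s" and ?y = "Cod C s"
      obtain s1 s2 r0 r1 tau al' where td: "t = (s1,s2,r0,r1,tau,al')" by (cases t) auto
      obtain B0 B1 k psi where s1d: "s1 = (B0,B1,k,psi)" by (cases s1) auto
      obtain B0' B1' k' psi' where s2d: "s2 = (B0',B1',k',psi')" by (cases s2) auto
      have e': "B0 = K ?x" "B1 = K (fo iC ?x)" "psi = I ?x" "B0' = K ?y" "B1' = K (fo iC ?y)" "psi' = I ?y"
        "r0 = R s" "r1 = R (fm iC s)" "al' = al s"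
        using e by (simp_all add: hm_def td s1d s2d p_arr_def p_obj_def ho_def)
      have tm: "k \<in> Obj (K ?x)" "k' \<in> Obj (K ?y)" "tau \<in> hom (K ?y) (fo (R s) k) k'"
        using t by (simp_all add: td s1d s2d e' Ut_arr_mem Ut_obj_mem)
      obtain z where z: "z \<in> Fo ?x" "k = eo ?x z" using tm(1) by (auto simp: K_Obj)
      obtain z' where z': "z' \<in> Fo ?y" "k' = eo ?y z'" using tm(2) by (auto simp: K_Obj)
      obtain n where n: "n \<in> Fa ?y" "tau = em ?y n" using tm(3) by (auto simp: hom_def K_Arr)
      have tz: "To s z \<in> Fo ?y" using To_Fo[OF s z(1)] .
      have nd: "Dom A n = To s z" "Cod A n = z'"
        using tm(3) n z z' tz R_o[OF s z(1)] Fa_dom[OF n(1)] Fa_cod[OF n(1)] by (auto simp: hom_def)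
      note Z = Fo_D[OF z(1)] and N = Fa_D[OF n(1)]
      define m where "m = Cmp A n (c s z)"
      have mA: "m \<in> Arr A" "fm f m = s" "Dom A m = z" "Cod A m = z'"
        using Z N nd s by (simp_all add: m_def To_def)
      have "gn m = n" using Z N nd s by (simp add: m_def gn_def To_def)
      then have "gm m = t" using mA s z z' n Fo_D[OF z'(1)] Fo_D[OF z(1)]
        by (simp add: gm_def td s1d s2d e' go_def gtau_def)
      then show "w \<in> (\<lambda>m. (fm f m, gm m)) ` Arr A" using mA by (auto simp: wd)
    qed
  qed
qed

lemma pullback: "is_pullback_of_p kappa A iA C iC f"
  unfolding is_pullback_of_p_def
proof (intro exI)
  show "is_pullback_square A iA C iC (Ut kappa) Ut_inv (U kappa) U_inv f g h p"
    unfolding is_pullback_square_def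
  proof (intro conjI ballI)
    show "gpdG_mor A iA C iC f" by (rule mf)
    show "gpdG_mor A iA (Ut kappa) Ut_inv g" by (rule g_mor)
    show "gpdG_mor C iC (U kappa) U_inv h" by (rule h_mor)
    show "gpdG_mor (Ut kappa) Ut_inv (U kappa) U_inv p" by (rule p_mor)
  next
    fix a assume "a \<in> Obj A" then show "fo h (fo f a) = fo p (fo g a)"
      by (simp add: h_def g_def go_def ho_def p_obj_def)
  next
    fix m assume "m \<in> Arr A" then show "fm h (fm f m) = fm p (fm g m)"
      by (simp add: h_def g_def hm_def gm_def p_arr_def p_obj_def go_def ho_def)
  next
    show "gpdG_iso A iA (pb_gpd C (Ut kappa) h p) (pb_inv iC Ut_inv) ((\<lambda>a. (fo f a, fo g a)), (\<lambda>m. (fm f m, fm g m)))"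
      unfolding gpdG_iso_def g_def fst_conv snd_conv using pb_mor pb_bij_o pb_bij_m by simp
  qed
qed

end


theorem lemma4p17:
  fixes kappa :: "'k rel"
    and A :: "('ao, 'am) gpd" and iA :: "('ao, 'am, 'ao, 'am) fn"
    and C :: "('co, 'cm) gpd" and iC :: "('co, 'cm, 'co, 'cm) fn"
    and f :: "('ao, 'am, 'co, 'cm) fn"
  assumes "inaccessible kappa"
    and "gpdG A iA" and "gpdG C iC"
    and "gpdG_mor A iA C iC f"
  shows "is_pullback_of_p kappa A iA C iC f \<longleftrightarrow>
         (split_fibration A C f \<and> (\<forall>x\<in>Obj C. small kappa (fiber A C f x)))"
proof
  assume "is_pullback_of_p kappa A iA C iC f"
  then obtain g :: "('ao, 'am, 'k tobj, 'k tarr) fn" and h :: "('co, 'cm, 'k uobj, 'k uarr) fn"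
    where pb: "is_pullback_square A iA C iC (Ut kappa) Ut_inv (U kappa) U_inv f g h p"
    unfolding is_pullback_of_p_def by blast
  have "groupoid A" "groupoid C" using assms(2,3) by (simp_all add: gpdG_def)
  then show "split_fibration A C f \<and> (\<forall>x\<in>Obj C. small kappa (fiber A C f x))"
    using dir1[OF _ _ pb] by blast
next
  assume r: "split_fibration A C f \<and> (\<forall>x\<in>Obj C. small kappa (fiber A C f x))"
  then obtain c where c: "split_cleavage A C f c" unfolding split_fibration_def by blast
  interpret D: D2 kappa A iA C iC f c
    using assms c r by (unfold_locales) auto
  show "is_pullback_of_p kappa A iA C iC f" by (rule D.pullback)
qed

end
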